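(* Let $G:\mathbb{R}\to\mathbb{R}$ satisfy: $G\ge 0$ and $\mathrm{supp}(G)=\mathbb{R}$; $G\in W^{1,1}(\mathbb{R})\cap L^\infty(\mathbb{R})\cap C^2(\mathbb{R})$; $G(x)=g(|x|)$ with $g'(r)<0$ for all $r>0$, $g''(0)<0$, $\lim_{r\to+\infty}g(r)=0$; and $\int G=1$. For $L>0$ let $X_L=\{f\in C^1([0,L]):f(0)=0\}$ with norm $\|f\|_{L^\infty}+\|f'\|_{L^\infty}$ and let $\mathcal{H}_L:X_L\to X_L$ be $$\mathcal{H}_L[u](x)=\int_0^L\big(G(x-y)-G(x+y)\big)u(y)\,dy.$$ Let $\varepsilon(L)$ be the simple eigenvalue of $\mathcal{H}_L$ equal to its spectral radius, which has an eigenfunction $u\ge0$ (equivalently, the number $\varepsilon(L)>0$ for which there is a symmetric $\rho\in C^2([-L,L])$ of unit mass with $\rho'\le0$ on $[0,L]$ solving $\varepsilon(L)\rho(x)=\int_{-L}^LG(x-y)\rho(y)\,dy+C$ on $[-L,L]$, with $u=-\rho'$). Then $\varepsilon(L)$ is uniquely determined as a function of $L$, and: (i) $\varepsilon(L)$ is strictly increasing in $L$; (ii) $\lim_{L\to+\infty}\varepsilon(L)=1$; (iii) $\varepsilon(0)=0$, where for $L=0$ the operator $\mathcal{H}_0$ is the zero operator.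
   Context: Eigenvalue equation: $\varepsilon u=\mathcal{H}_L[u]$. *)

theory Defs
  imports "HOL-Analysis.Analysis"
begin

definition C1_on_interval :: "real \<Rightarrow> (real \<Rightarrow> real) \<Rightarrow> bool" where
  "C1_on_interval L f \<longleftrightarrow>
     (\<exists>D. (\<forall>x\<in>{0..L}. (f has_real_derivative D x) (at x within {0..L}))
          \<and> continuous_on {0..L} D)"

definition X_space :: "real \<Rightarrow> (real \<Rightarrow> real) set" where
  "X_space L = {f. C1_on_interval L f \<and> f 0 = 0}"

definition H_op :: "(real \<Rightarrow> real) \<Rightarrow> real \<Rightarrow> (real \<Rightarrow> real) \<Rightarrow> real \<Rightarrow> real" where
  "H_op G L u x = integral {0..L} (\<lambda>y. (G (x - y) - G (x + y)) * u y)"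

definition pos_eigenvalue :: "(real \<Rightarrow> real) \<Rightarrow> real \<Rightarrow> real \<Rightarrow> bool" where
  "pos_eigenvalue G L e \<longleftrightarrow>
     (\<exists>u. u \<in> X_space L \<and> (\<forall>x\<in>{0..L}. u x \<ge> 0) \<and> (\<exists>x\<in>{0..L}. u x \<noteq> 0)
          \<and> (\<forall>x\<in>{0..L}. e * u x = H_op G L u x))"

text \<open>epsilon(L); for L = 0 the operator is zero and epsilon(0) is its spectral radius 0.\<close>
definition eps :: "(real \<Rightarrow> real) \<Rightarrow> real \<Rightarrow> real" where
  "eps G L = (if L = 0 then 0 else (THE e. pos_eigenvalue G L e))"

end

theory Submission
  imports Defs
begin



lemma deriv_upper:
  fixes f f' :: "real \<Rightarrow> real"
  assumes "a \<le> b" "\<And>x. a \<le> x \<Longrightarrow> x \<le> b \<Longrightarrow> (f has_real_derivative f' x) (at x)"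
    "\<And>x. a \<le> x \<Longrightarrow> x \<le> b \<Longrightarrow> f' x \<le> C"
  shows "f b - f a \<le> (b - a) * C"
proof (cases "a = b")
  case False
  then have "a < b" using assms by auto
  from MVT2[OF this] assms(2) obtain z where z: "a < z" "z < b" "f b - f a = (b - a) * f' z"
    by (metis less_eq_real_def)
  then show ?thesis using assms(3)[of z] \<open>a < b\<close> by (simp add: mult_left_mono)
qed simp

lemma deriv_lower:
  fixes f f' :: "real \<Rightarrow> real"
  assumes "a \<le> b" "\<And>x. a \<le> x \<Longrightarrow> x \<le> b \<Longrightarrow> (f has_real_derivative f' x) (at x)"
    "\<And>x. a \<le> x \<Longrightarrow> x \<le> b \<Longrightarrow> C \<le> f' x"
  shows "(b - a) * C \<le> f b - f a"
proof (cases "a = b")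
  case False
  then have "a < b" using assms by auto
  from MVT2[OF this] assms(2) obtain z where z: "a < z" "z < b" "f b - f a = (b - a) * f' z"
    by (metis less_eq_real_def)
  then show ?thesis using assms(3)[of z] \<open>a < b\<close> by (simp add: mult_left_mono)
qed simp

locale kern =
  fixes G G1 G2 :: "real \<Rightarrow> real"
  assumes even: "\<And>x. G (-x) = G x"
  and d1: "\<And>x. (G has_real_derivative G1 x) (at x)"
  and d2: "\<And>x. (G1 has_real_derivative G2 x) (at x)"
  and c2: "continuous_on UNIV G2"
  and G2_0: "G2 0 < 0"
  and G1_neg: "\<And>x. x > 0 \<Longrightarrow> G1 x < 0"
  and nonneg: "\<And>x. G x \<ge> 0"
  and int1: "(G has_integral 1) UNIV"
begin

definition K :: "real \<Rightarrow> real \<Rightarrow> real" where "K x y = G (x - y) - G (x + y)"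

lemma contG: "continuous_on UNIV G"
  using d1 by (meson DERIV_isCont continuous_at_imp_continuous_on)

lemma contG1: "continuous_on UNIV G1"
  using d2 by (meson DERIV_isCont continuous_at_imp_continuous_on)

lemma G1_odd: "G1 (-x) = - G1 x"
proof -
  have "((\<lambda>x. G (-x)) has_real_derivative G1 (-x) * (-1)) (at x)"
    by (rule DERIV_chain2[OF d1]) (auto intro!: derivative_eq_intros)
  then have "(G has_real_derivative - G1 (-x)) (at x)" using even by simp
  from DERIV_unique[OF d1 this] show ?thesis by simp
qed

lemma G1_0: "G1 0 = 0" using G1_odd[of 0] by simp

lemma G1_nonpos: "x \<ge> 0 \<Longrightarrow> G1 x \<le> 0"
  using G1_neg[of x] G1_0 by (cases "x = 0") auto

lemma G1_nonneg: "x \<le> 0 \<Longrightarrow> G1 x \<ge> 0"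
  using G1_nonpos[of "-x"] G1_odd[of x] by simp

lemma G_strict: assumes "0 \<le> a" "a < b" shows "G b < G a"
proof -
  from MVT2[OF assms(2), of G G1] d1 obtain z where "a < z" "z < b" "G b - G a = (b - a) * G1 z"
    by blast
  moreover have "G1 z < 0" using G1_neg \<open>a < z\<close> assms by auto
  then have "(b - a) * G1 z < 0" using assms by (intro mult_pos_neg) auto
  ultimately show ?thesis by linarith
qed

lemma G_abs: "G x = G \<bar>x\<bar>"
  using even[of x] by (cases "x \<ge> 0") auto

lemma K_sym: "K x y = K y x"
  unfolding K_def using even[of "x - y"] by (simp add: add.commute)

lemma K_zero: "K 0 y = 0"
  unfolding K_def using even[of y] by simp

lemma K_zero2: "K x 0 = 0"
  unfolding K_def by simp

lemma K_pos: assumes "x > 0" "y > 0" shows "K x y > 0"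
proof -
  have "\<bar>x - y\<bar> < x + y" using assms by auto
  from G_strict[OF _ this] have "G (x + y) < G \<bar>x - y\<bar>" by simp
  then show ?thesis unfolding K_def using G_abs[of "x - y"] by simp
qed

lemma K_nonneg: assumes "x \<ge> 0" "y \<ge> 0" shows "K x y \<ge> 0"
  using K_pos[of x y] K_zero[of y] K_zero2[of x] assms
  by (cases "x = 0"; cases "y = 0") auto

lemma K_cont: "continuous_on S (\<lambda>(x, y). K x y)"
  unfolding K_def using contG
  by (auto intro!: continuous_intros continuous_on_compose2[OF contG] simp: split_beta)

lemma K_dx: "((\<lambda>x. K x y) has_real_derivative (G1 (x - y) - G1 (x + y))) (at x)"
  unfolding K_def
  by (rule derivative_eq_intros DERIV_chain2[OF d1] | simp)+

end


context kern begin

lemma G2_bound: "\<exists>B\<ge>0. \<forall>s. \<bar>s\<bar> \<le> R \<longrightarrow> \<bar>G2 s\<bar> \<le> B"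
proof -
  have "compact (G2 ` {-\<bar>R\<bar>..\<bar>R\<bar>})"
    by (rule compact_continuous_image) (auto intro: continuous_on_subset[OF c2])
  then obtain B where B: "\<forall>v\<in>G2 ` {-\<bar>R\<bar>..\<bar>R\<bar>}. norm v \<le> B"
    using compact_imp_bounded bounded_iff by blast
  show ?thesis
  proof (intro exI[of _ "\<bar>B\<bar>"] conjI allI impI)
    fix s assume "\<bar>s\<bar> \<le> R"
    then have "s \<in> {-\<bar>R\<bar>..\<bar>R\<bar>}" by auto
    then have "norm (G2 s) \<le> B" using B by auto
    then show "\<bar>G2 s\<bar> \<le> \<bar>B\<bar>" by auto
  qed auto
qed

lemma K_upper: assumes "L \<ge> 0"
  shows "\<exists>M>0. \<forall>x y. 0 \<le> x \<longrightarrow> x \<le> L \<longrightarrow> 0 \<le> y \<longrightarrow> y \<le> L \<longrightarrow> K x y \<le> M * x * y"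
proof -
  obtain B where B: "B \<ge> 0" "\<And>s. \<bar>s\<bar> \<le> 2 * L \<Longrightarrow> \<bar>G2 s\<bar> \<le> B"
    using G2_bound[of "2 * L"] by auto
  have "K x y \<le> (2 * B + 1) * x * y" if xy: "0 \<le> x" "x \<le> L" "0 \<le> y" "y \<le> L" for x y
  proof -
    have d: "G1 (t - y) - G1 (t + y) \<le> 2 * y * B" if t: "0 \<le> t" "t \<le> x" for t
    proof -
      have "(t + y - (t - y)) * (- B) \<le> G1 (t + y) - G1 (t - y)"
      proof (rule deriv_lower[of "t - y" "t + y" G1 G2])
        fix s assume "t - y \<le> s" "s \<le> t + y"
        then have "\<bar>s\<bar> \<le> 2 * L" using xy t by auto
        then show "- B \<le> G2 s" using B(2)[of s] by auto
      qed (use xy t in \<open>auto intro: d2\<close>)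
      then show ?thesis by (simp add: algebra_simps)
    qed
    have "K x y - K 0 y \<le> (x - 0) * (2 * y * B)"
      by (rule deriv_upper[of 0 x "\<lambda>x. K x y"]) (use xy d K_dx in auto)
    then have "K x y \<le> 2 * B * x * y" using K_zero by (simp add: algebra_simps)
    also have "\<dots> \<le> (2 * B + 1) * x * y" using xy by (simp add: mult_right_mono)
    finally show ?thesis .
  qed
  then show ?thesis using B by (intro exI[of _ "2 * B + 1"]) auto
qed

end


context kern begin

lemma K_lower: assumes L: "L > 0"
  shows "\<exists>m>0. \<forall>x y. 0 \<le> x \<longrightarrow> x \<le> L \<longrightarrow> 0 \<le> y \<longrightarrow> y \<le> L \<longrightarrow> m * x * y \<le> K x y"
proof -
  define c0 where "c0 = - G2 0 / 2"
  have c0: "c0 > 0" using G2_0 unfolding c0_def by simp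
  have "\<forall>x\<in>UNIV. \<forall>e>0. \<exists>d>0. \<forall>x'\<in>UNIV. dist x' x < d \<longrightarrow> dist (G2 x') (G2 x) < e"
    using c2 unfolding continuous_on_iff by blast
  then obtain d where d: "d > 0" "\<And>s. dist s 0 < d \<Longrightarrow> dist (G2 s) (G2 0) < c0"
    using c0 by blast
  define \<delta> where "\<delta> = min (d / 3) L"
  have \<delta>: "0 < \<delta>" "\<delta> \<le> L" "3 * \<delta> \<le> d" using d L unfolding \<delta>_def by auto
  have G2neg: "G2 s \<le> - c0" if "\<bar>s\<bar> \<le> 2 * \<delta>" for s
  proof -
    have "dist s 0 < d" using that \<delta> by (simp add: dist_real_def)
    from d(2)[OF this] show ?thesis unfolding c0_def dist_real_def by linarith
  qed
  have A: "2 * c0 * x * y \<le> K x y" if xy: "0 \<le> x" "x \<le> \<delta>" "0 \<le> y" "y \<le> \<delta>" for x y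
  proof -
    have dd: "2 * c0 * y \<le> G1 (t - y) - G1 (t + y)" if t: "0 \<le> t" "t \<le> x" for t
    proof -
      have "G1 (t + y) - G1 (t - y) \<le> (t + y - (t - y)) * (- c0)"
      proof (rule deriv_upper[of "t - y" "t + y" G1 G2])
        fix s assume "t - y \<le> s" "s \<le> t + y"
        then have "\<bar>s\<bar> \<le> 2 * \<delta>" using xy t by auto
        then show "G2 s \<le> - c0" by (rule G2neg)
      qed (use xy t in \<open>auto intro: d2\<close>)
      then show ?thesis by (simp add: algebra_simps)
    qed
    have "(x - 0) * (2 * c0 * y) \<le> K x y - K 0 y"
      by (rule deriv_lower[of 0 x "\<lambda>x. K x y"]) (use xy dd K_dx in auto)
    then show ?thesis using K_zero by (simp add: algebra_simps)
  qed
  have "\<exists>z\<in>{\<delta>..L + \<delta>}. \<forall>s\<in>{\<delta>..L + \<delta>}. G1 s \<le> G1 z"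
    by (rule continuous_attains_sup) (use \<delta> in \<open>auto intro: continuous_on_subset[OF contG1]\<close>)
  then obtain z where z: "z \<in> {\<delta>..L + \<delta>}" "\<And>s. s \<in> {\<delta>..L + \<delta>} \<Longrightarrow> G1 s \<le> G1 z"
    by blast
  define c1 where "c1 = - G1 z"
  have c1: "c1 > 0" using G1_neg[of z] z \<delta> unfolding c1_def by auto
  have B: "c1 / L * x * y \<le> K x y" if xy: "0 \<le> x" "x \<le> \<delta>" "\<delta> \<le> y" "y \<le> L" for x y
  proof -
    have dd: "c1 \<le> G1 (t - y) - G1 (t + y)" if t: "0 \<le> t" "t \<le> x" for t
    proof -
      have "G1 (t - y) \<ge> 0" using G1_nonneg[of "t - y"] xy t by auto
      moreover have "G1 (t + y) \<le> G1 z" using z(2)[of "t + y"] xy t by auto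
      ultimately show ?thesis unfolding c1_def by linarith
    qed
    have "(x - 0) * c1 \<le> K x y - K 0 y"
      by (rule deriv_lower[of 0 x "\<lambda>x. K x y"]) (use xy dd K_dx in auto)
    then have "x * c1 \<le> K x y" using K_zero by simp
    moreover have "c1 / L * x * y \<le> x * c1"
    proof -
      have "c1 / L * y \<le> c1" using xy L c1 by (simp add: field_simps)
      then have "x * (c1 / L * y) \<le> x * c1" using xy by (intro mult_left_mono) auto
      then show ?thesis by (simp add: algebra_simps)
    qed
    ultimately show ?thesis by linarith
  qed
  have "\<exists>p\<in>{\<delta>..L} \<times> {\<delta>..L}. \<forall>q\<in>{\<delta>..L} \<times> {\<delta>..L}. (\<lambda>(x, y). K x y) p \<le> (\<lambda>(x, y). K x y) q"
    by (rule continuous_attains_inf) (use \<delta> K_cont in \<open>auto simp: compact_Times\<close>)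
  then obtain p where p: "p \<in> {\<delta>..L} \<times> {\<delta>..L}"
    "\<And>q. q \<in> {\<delta>..L} \<times> {\<delta>..L} \<Longrightarrow> (\<lambda>(x, y). K x y) p \<le> (\<lambda>(x, y). K x y) q"
    by blast
  define c2 where "c2 = K (fst p) (snd p)"
  have c2: "c2 > 0" unfolding c2_def using p(1) \<delta> by (intro K_pos) auto
  have D: "c2 / (L * L) * x * y \<le> K x y" if xy: "\<delta> \<le> x" "x \<le> L" "\<delta> \<le> y" "y \<le> L" for x y
  proof -
    have "c2 \<le> K x y" using p(2)[of "(x, y)"] xy unfolding c2_def by (auto simp: split_beta)
    moreover have "c2 / (L * L) * x * y \<le> c2"
    proof -
      have "x * y \<le> L * L" using xy \<delta> by (intro mult_mono) auto
      then have "c2 * (x * y) \<le> c2 * (L * L)" using c2 by (intro mult_left_mono) auto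
      then show ?thesis using L by (simp add: field_simps)
    qed
    ultimately show ?thesis by linarith
  qed
  define m where "m = min (2 * c0) (min (c1 / L) (c2 / (L * L)))"
  have m: "m > 0" using c0 c1 c2 L unfolding m_def by auto
  have "m * x * y \<le> K x y" if xy: "0 \<le> x" "x \<le> L" "0 \<le> y" "y \<le> L" for x y
  proof -
    have xy0: "0 \<le> x * y" using xy by auto
    have le: "m * x * y \<le> c * x * y" if "m \<le> c" for c
      using mult_right_mono[OF that xy0] by (simp add: mult.assoc)
    show ?thesis
    proof (cases "x \<le> \<delta>")
      case True
      show ?thesis
      proof (cases "y \<le> \<delta>")
        case True
        have "m \<le> 2 * c0" unfolding m_def by auto
        then show ?thesis using le[of "2 * c0"] A[of x y] xy \<open>x \<le> \<delta>\<close> True by linarith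
      next
        case False
        have "m \<le> c1 / L" unfolding m_def by auto
        then show ?thesis using le[of "c1 / L"] B[of x y] xy \<open>x \<le> \<delta>\<close> False by linarith
      qed
    next
      case False
      show ?thesis
      proof (cases "y \<le> \<delta>")
        case True
        have "m \<le> c1 / L" unfolding m_def by auto
        then have "m * x * y \<le> c1 / L * x * y" by (rule le)
        also have "\<dots> = c1 / L * y * x" by (simp add: mult.commute mult.left_commute)
        also have "\<dots> \<le> K y x" using B[of y x] xy \<open>\<not> x \<le> \<delta>\<close> True by linarith
        finally show ?thesis using K_sym[of x y] by simp
      next
        case False
        have "m \<le> c2 / (L * L)" unfolding m_def by auto
        then show ?thesis using le[of "c2 / (L * L)"] D[of x y] xy \<open>\<not> x \<le> \<delta>\<close> False by linarith
      qed
    qed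
  qed
  then show ?thesis using m by blast
qed

end


context kern begin

definition H :: "real \<Rightarrow> (real \<Rightarrow> real) \<Rightarrow> real \<Rightarrow> real" where
  "H L f x = integral {0..L} (\<lambda>y. K x y * f y)"

lemma H_eq: "H_op G L f x = H L f x"
  unfolding H_op_def H_def K_def by simp

lemma cont_comb:
  fixes \<phi> f :: "real \<Rightarrow> real"
  assumes "continuous_on UNIV \<phi>" "continuous_on {0..L} f"
  shows "continuous_on (UNIV \<times> {0..L}) (\<lambda>(x, t). (\<phi> (x - t) - \<phi> (x + t)) * f t)"
proof -
  have f: "continuous_on (UNIV \<times> {0..L}) (\<lambda>p. f (snd p))"
    by (rule continuous_on_compose2[OF assms(2)]) (auto intro: continuous_intros)
  have p1: "continuous_on (UNIV \<times> {0..L}) (\<lambda>p. \<phi> (fst p - snd p))"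
    by (rule continuous_on_compose2[OF assms(1), of _ "\<lambda>p. fst p - snd p"]) (auto intro!: continuous_intros)
  have p2: "continuous_on (UNIV \<times> {0..L}) (\<lambda>p. \<phi> (fst p + snd p))"
    by (rule continuous_on_compose2[OF assms(1), of _ "\<lambda>p. fst p + snd p"]) (auto intro!: continuous_intros)
  show ?thesis using f p1 p2 by (auto simp: split_beta intro!: continuous_intros)
qed

lemma param_cont:
  fixes \<phi> f :: "real \<Rightarrow> real"
  assumes "continuous_on UNIV \<phi>" "continuous_on {0..L} f"
  shows "continuous_on UNIV (\<lambda>x. integral {0..L} (\<lambda>y. (\<phi> (x - y) - \<phi> (x + y)) * f y))"
  using integral_continuous_on_param[of UNIV 0 L "\<lambda>x y. (\<phi> (x - y) - \<phi> (x + y)) * f y"]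
    cont_comb[OF assms] by simp

lemma Kx_cont: "continuous_on S (\<lambda>y. K x y)"
  unfolding K_def by (auto intro!: continuous_intros continuous_on_compose2[OF contG])

lemma H_integrable: "continuous_on {0..L} f \<Longrightarrow> (\<lambda>y. K x y * f y) integrable_on {0..L}"
  by (intro integrable_continuous_interval continuous_intros Kx_cont)

lemma H_cont: "continuous_on {0..L} f \<Longrightarrow> continuous_on S (H L f)"
  using param_cont[OF contG, of L f] unfolding H_def K_def
  by (rule continuous_on_subset) auto

definition H1 :: "real \<Rightarrow> (real \<Rightarrow> real) \<Rightarrow> real \<Rightarrow> real" where
  "H1 L f x = integral {0..L} (\<lambda>y. (G1 (x - y) - G1 (x + y)) * f y)"

lemma H1_cont: "continuous_on {0..L} f \<Longrightarrow> continuous_on S (H1 L f)"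
  using param_cont[OF contG1, of L f] unfolding H1_def
  by (rule continuous_on_subset) auto

lemma H_deriv:
  assumes f: "continuous_on {0..L} f" and x: "x \<in> {0..L}"
  shows "(H L f has_real_derivative H1 L f x) (at x within {0..L})"
proof -
  have "((\<lambda>x. integral (cbox 0 L) (\<lambda>y. K x y * f y)) has_field_derivative
      integral (cbox 0 L) (\<lambda>y. (G1 (x - y) - G1 (x + y)) * f y)) (at x within {0..L})"
  proof (rule leibniz_rule_field_derivative)
    fix x t :: real
    show "((\<lambda>x. K x t * f t) has_field_derivative (G1 (x - t) - G1 (x + t)) * f t) (at x within {0..L})"
      by (rule DERIV_subset[OF DERIV_cmult_right[OF K_dx] subset_UNIV])
  next
    fix x show "(\<lambda>y. K x y * f y) integrable_on cbox 0 L" using H_integrable[OF f] by simp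
  next
    show "continuous_on ({0..L} \<times> cbox 0 L) (\<lambda>(x, t). (G1 (x - t) - G1 (x + t)) * f t)"
      using cont_comb[OF contG1 f] by (rule continuous_on_subset) auto
  qed (use x in auto)
  then show ?thesis unfolding H_def H1_def by simp
qed

lemma H_C1: "continuous_on {0..L} f \<Longrightarrow> C1_on_interval L (H L f)"
  unfolding C1_on_interval_def using H_deriv H1_cont by blast

lemma H_zero: "H L f 0 = 0"
  unfolding H_def by (simp add: K_zero)

lemma H_mono:
  assumes "continuous_on {0..L} f" "continuous_on {0..L} g" "\<And>y. y \<in> {0..L} \<Longrightarrow> f y \<le> g y" "x \<ge> 0"
  shows "H L f x \<le> H L g x"
  unfolding H_def
  by (rule integral_le[OF H_integrable[OF assms(1)] H_integrable[OF assms(2)]])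
     (use assms K_nonneg in \<open>auto intro: mult_left_mono\<close>)

lemma H_scale: "H L (\<lambda>y. c * f y) x = c * H L f x"
  unfolding H_def by (simp add: mult.left_commute)

lemma H_diff:
  assumes "continuous_on {0..L} f" "continuous_on {0..L} g"
  shows "H L (\<lambda>y. f y - g y) x = H L f x - H L g x"
proof -
  have "H L (\<lambda>y. f y - g y) x = integral {0..L} (\<lambda>y. K x y * f y - K x y * g y)"
    unfolding H_def by (simp add: right_diff_distrib)
  also have "\<dots> = H L f x - H L g x"
    unfolding H_def by (rule integral_diff) (intro H_integrable assms)+
  finally show ?thesis .
qed

lemma H_ext:
  assumes "\<And>y. y \<in> {0..L} \<Longrightarrow> f y = g y"
  shows "H L f x = H L g x"
  unfolding H_def by (rule integral_cong) (use assms in auto)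

lemma H_lower:
  assumes m: "\<forall>x y. 0 \<le> x \<longrightarrow> x \<le> L \<longrightarrow> 0 \<le> y \<longrightarrow> y \<le> L \<longrightarrow> m * x * y \<le> K x y"
    and f: "continuous_on {0..L} f" "\<And>y. y \<in> {0..L} \<Longrightarrow> f y \<ge> 0" and x: "x \<in> {0..L}"
  shows "m * x * integral {0..L} (\<lambda>y. y * f y) \<le> H L f x"
proof -
  have "integral {0..L} (\<lambda>y. (m * x) * (y * f y)) \<le> H L f x"
    unfolding H_def
    by (rule integral_le) (use m f x in \<open>auto intro!: integrable_continuous_interval continuous_intros
        Kx_cont mult_right_mono simp: mult.assoc[symmetric]\<close>)
  then show ?thesis by simp
qed

lemma H_upper:
  assumes M: "\<forall>x y. 0 \<le> x \<longrightarrow> x \<le> L \<longrightarrow> 0 \<le> y \<longrightarrow> y \<le> L \<longrightarrow> K x y \<le> M * x * y"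
    and f: "continuous_on {0..L} f" "\<And>y. y \<in> {0..L} \<Longrightarrow> f y \<ge> 0" and x: "x \<in> {0..L}"
  shows "H L f x \<le> M * x * integral {0..L} (\<lambda>y. y * f y)"
proof -
  have "H L f x \<le> integral {0..L} (\<lambda>y. (M * x) * (y * f y))"
    unfolding H_def
    by (rule integral_le) (use M f x in \<open>auto intro!: integrable_continuous_interval continuous_intros
        Kx_cont mult_right_mono simp: mult.assoc[symmetric]\<close>)
  then show ?thesis by simp
qed

lemma H_sym:
  assumes f: "continuous_on {0..L} f" and g: "continuous_on {0..L} g"
  shows "integral {0..L} (\<lambda>x. H L f x * g x) = integral {0..L} (\<lambda>x. f x * H L g x)"
proof -
  have c: "continuous_on (cbox (0, 0) (L, L)) (\<lambda>(x, y). K x y * f y * g x)"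
  proof -
    have f': "continuous_on (cbox (0, 0) (L, L)) (\<lambda>p::real\<times>real. f (snd p))"
      by (rule continuous_on_compose2[OF f]) (auto intro: continuous_intros simp: cbox_Pair_eq)
    have g': "continuous_on (cbox (0, 0) (L, L)) (\<lambda>p::real\<times>real. g (fst p))"
      by (rule continuous_on_compose2[OF g]) (auto intro: continuous_intros simp: cbox_Pair_eq)
    have k: "continuous_on (cbox (0, 0) (L, L)) (\<lambda>p::real\<times>real. K (fst p) (snd p))"
      using K_cont by (simp add: split_beta)
    show ?thesis using f' g' k by (auto simp: split_beta intro!: continuous_intros)
  qed
  have "integral {0..L} (\<lambda>x. H L f x * g x) = integral (cbox 0 L) (\<lambda>x. integral (cbox 0 L) (\<lambda>y. K x y * f y * g x))"
    unfolding H_def by simp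
  also have "\<dots> = integral (cbox 0 L) (\<lambda>y. integral (cbox 0 L) (\<lambda>x. K x y * f y * g x))"
    by (rule integral_swap_continuous[OF c])
  also have "\<dots> = integral {0..L} (\<lambda>y. f y * H L g y)"
    unfolding H_def cbox_interval
  proof (rule integral_cong)
    fix y
    have "integral {0..L} (\<lambda>x. K x y * f y * g x) = integral {0..L} (\<lambda>x. f y * (K y x * g x))"
      by (rule integral_cong) (simp add: K_sym[of y] mult.commute mult.left_commute)
    also have "\<dots> = f y * integral {0..L} (\<lambda>x. K y x * g x)" by simp
    finally show "integral {0..L} (\<lambda>x. K x y * f y * g x) = f y * integral {0..L} (\<lambda>x. K y x * g x)" .
  qed
  finally show ?thesis .
qed

lemma H_approx:
  assumes B: "\<forall>x y. 0 \<le> x \<longrightarrow> x \<le> L \<longrightarrow> 0 \<le> y \<longrightarrow> y \<le> L \<longrightarrow> K x y \<le> B"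
    and f: "continuous_on {0..L} f" and g: "continuous_on {0..L} g"
    and e: "\<And>y. y \<in> {0..L} \<Longrightarrow> \<bar>f y - g y\<bar> \<le> e" and x: "x \<in> {0..L}" and L: "L \<ge> 0"
  shows "\<bar>H L f x - H L g x\<bar> \<le> B * e * L"
proof -
  have "\<bar>H L f x - H L g x\<bar> = \<bar>integral {0..L} (\<lambda>y. K x y * (f y - g y))\<bar>"
    using H_diff[OF f g, where x=x] unfolding H_def by simp
  also have "\<dots> \<le> integral {0..L} (\<lambda>y. B * e)"
  proof -
    have "norm (integral {0..L} (\<lambda>y. K x y * (f y - g y))) \<le> integral {0..L} (\<lambda>y. B * e)"
    proof (rule integral_norm_bound_integral)
      show "(\<lambda>y. K x y * (f y - g y)) integrable_on {0..L}"
        by (intro integrable_continuous_interval continuous_intros Kx_cont f g)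
      show "(\<lambda>y. B * e) integrable_on {0..L}" by (rule integrable_continuous_interval) (rule continuous_on_const)
      fix y assume y: "y \<in> {0..L}"
      have k: "0 \<le> K x y" "K x y \<le> B" using K_nonneg B x y by auto
      have "\<bar>K x y * (f y - g y)\<bar> = K x y * \<bar>f y - g y\<bar>" using k by (simp add: abs_mult)
      also have "\<dots> \<le> B * e" using k e[OF y] by (intro mult_mono) auto
      finally show "norm (K x y * (f y - g y)) \<le> B * e" by simp
    qed
    then show ?thesis by simp
  qed
  also have "\<dots> = B * e * L" using L by simp
  finally show ?thesis .
qed

end



lemma pos_int:
  fixes f :: "real \<Rightarrow> real"
  assumes "continuous_on {a..b} f" "\<And>x. x \<in> {a..b} \<Longrightarrow> f x \<ge> 0" "x0 \<in> {a..b}" "f x0 > 0" "a < b"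
  shows "integral {a..b} f > 0"
proof -
  have "integral {a..b} f \<ge> 0"
    by (rule integral_nonneg) (use assms in \<open>auto intro: integrable_continuous_interval\<close>)
  moreover have "integral {a..b} f \<noteq> 0"
    using integral_eq_0_iff[of a b f] assms by auto
  ultimately show ?thesis by linarith
qed

context kern begin

definition eigen :: "real \<Rightarrow> real \<Rightarrow> (real \<Rightarrow> real) \<Rightarrow> bool" where
  "eigen L e u \<longleftrightarrow> continuous_on {0..L} u \<and> u 0 = 0 \<and> (\<forall>x\<in>{0..L}. u x \<ge> 0)
     \<and> (\<exists>x\<in>{0..L}. u x \<noteq> 0) \<and> (\<forall>x\<in>{0..L}. e * u x = H L u x)"

lemma C1_cont: "C1_on_interval L f \<Longrightarrow> continuous_on {0..L} f"
  unfolding C1_on_interval_def continuous_on_eq_continuous_within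
  using DERIV_continuous by blast

lemma pos_eigen_imp: "pos_eigenvalue G L e \<Longrightarrow> \<exists>u. eigen L e u"
  unfolding pos_eigenvalue_def eigen_def X_space_def using C1_cont H_eq by auto

lemma eigen_props:
  assumes L: "L > 0" and eig: "eigen L e u"
  shows "e > 0" "\<exists>c>0. \<forall>x\<in>{0..L}. c * x \<le> u x"
proof -
  obtain m where m: "m > 0" "\<forall>x y. 0 \<le> x \<longrightarrow> x \<le> L \<longrightarrow> 0 \<le> y \<longrightarrow> y \<le> L \<longrightarrow> m * x * y \<le> K x y"
    using K_lower[OF L] by blast
  have uc: "continuous_on {0..L} u" and u0: "u 0 = 0" and unn: "\<forall>x\<in>{0..L}. u x \<ge> 0"
    and eq: "\<forall>x\<in>{0..L}. e * u x = H L u x" using eig unfolding eigen_def by auto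
  obtain x0 where x0: "x0 \<in> {0..L}" "u x0 \<noteq> 0" using eig unfolding eigen_def by auto
  have ux0: "u x0 > 0" using x0 unn by force
  have x0p: "x0 > 0" using x0 u0 by (cases "x0 = 0") auto
  define I where "I = integral {0..L} (\<lambda>y. y * u y)"
  have I: "I > 0" unfolding I_def
    by (rule pos_int[of 0 L _ x0]) (use uc unn x0 ux0 x0p L in \<open>auto intro!: continuous_intros\<close>)
  have low: "m * x * I \<le> e * u x" if "x \<in> {0..L}" for x
    using H_lower[OF m(2) uc _ that] unn eq that unfolding I_def by auto
  have "0 < m * x0 * I" using m I x0p by simp
  also have "\<dots> \<le> e * u x0" using low x0 by blast
  finally have "0 < e * u x0" .
  then show e: "e > 0" using ux0 by (simp add: zero_less_mult_iff)
  show "\<exists>c>0. \<forall>x\<in>{0..L}. c * x \<le> u x"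
  proof (intro exI[of _ "m * I / e"] conjI ballI)
    show "m * I / e > 0" using m I e by simp
    fix x assume x: "x \<in> {0..L}"
    have "m * x * I \<le> e * u x" using low x by blast
    then show "m * I / e * x \<le> u x" using e by (simp add: field_simps)
  qed
qed

lemma eigen_cont_sub: "eigen L e u \<Longrightarrow> L' \<le> L \<Longrightarrow> continuous_on {0..L'} u"
  unfolding eigen_def by (auto elim: continuous_on_subset)

lemma eigen_unique:
  assumes L: "L > 0" and eu: "eigen L e1 u" and ev: "eigen L e2 v"
  shows "e1 = e2"
proof -
  have uc: "continuous_on {0..L} u" and vc: "continuous_on {0..L} v" using eu ev unfolding eigen_def by auto
  obtain c where c: "c > 0" "\<forall>x\<in>{0..L}. c * x \<le> v x" using eigen_props(2)[OF L ev] by blast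
  obtain x0 where x0: "x0 \<in> {0..L}" "u x0 \<noteq> 0" using eu unfolding eigen_def by auto
  have ux0: "u x0 > 0" using x0 eu unfolding eigen_def by force
  have x0p: "x0 > 0" using x0 eu unfolding eigen_def by (cases "x0 = 0") auto
  have X: "integral {0..L} (\<lambda>x. u x * v x) > 0"
  proof (rule pos_int[of 0 L _ x0])
    show "0 < u x0 * v x0" using ux0 c x0 x0p by (intro mult_pos_pos) (auto intro: less_le_trans[of _ "c * x0"])
    show "\<And>x. x \<in> {0..L} \<Longrightarrow> 0 \<le> u x * v x"
      using eu ev unfolding eigen_def by auto
  qed (use uc vc x0 L in \<open>auto intro!: continuous_intros\<close>)
  have "integral {0..L} (\<lambda>x. H L u x * v x) = integral {0..L} (\<lambda>x. e1 * (u x * v x))"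
    by (rule integral_cong) (use eu in \<open>auto simp: eigen_def\<close>)
  then have "e1 * integral {0..L} (\<lambda>x. u x * v x) = integral {0..L} (\<lambda>x. H L u x * v x)"
    by simp
  also have "\<dots> = integral {0..L} (\<lambda>x. u x * H L v x)" by (rule H_sym[OF uc vc])
  also have "\<dots> = integral {0..L} (\<lambda>x. e2 * (u x * v x))"
    by (rule integral_cong) (use ev in \<open>auto simp: eigen_def\<close>)
  also have "\<dots> = e2 * integral {0..L} (\<lambda>x. u x * v x)" by simp
  finally show ?thesis using X by simp
qed

end


context kern begin

lemma H_split:
  assumes v: "continuous_on {0..L2} v" and L: "0 \<le> L1" "L1 \<le> L2"
  shows "H L2 v x = H L1 v x + integral {L1..L2} (\<lambda>y. K x y * v y)"
  unfolding H_def
  by (rule Henstock_Kurzweil_Integration.integral_combine[symmetric]) (use L in \<open>auto intro: H_integrable[OF v]\<close>)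

lemma eigen_mono:
  assumes L: "0 < L1" "L1 < L2" and eu: "eigen L1 e1 u" and ev: "eigen L2 e2 v"
  shows "e1 < e2"
proof -
  have L2: "L2 > 0" using L by simp
  have uc: "continuous_on {0..L1} u" using eu unfolding eigen_def by auto
  have vc2: "continuous_on {0..L2} v" using ev unfolding eigen_def by auto
  have vc: "continuous_on {0..L1} v" using vc2 by (rule continuous_on_subset) (use L in auto)
  obtain c where c: "c > 0" "\<forall>x\<in>{0..L2}. c * x \<le> v x" using eigen_props(2)[OF L2 ev] by blast
  obtain m where m: "m > 0" "\<forall>x y. 0 \<le> x \<longrightarrow> x \<le> L2 \<longrightarrow> 0 \<le> y \<longrightarrow> y \<le> L2 \<longrightarrow> m * x * y \<le> K x y"
    using K_lower[OF L2] by blast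
  obtain x0 where x0: "x0 \<in> {0..L1}" "u x0 \<noteq> 0" using eu unfolding eigen_def by auto
  have ux0: "u x0 > 0" using x0 eu unfolding eigen_def by force
  have x0p: "x0 > 0" using x0 eu unfolding eigen_def by (cases "x0 = 0") auto
  have unn: "\<And>x. x \<in> {0..L1} \<Longrightarrow> u x \<ge> 0" using eu unfolding eigen_def by auto
  have vnn: "\<And>x. x \<in> {0..L2} \<Longrightarrow> v x \<ge> 0" using ev unfolding eigen_def by auto
  have vpos: "\<And>x. x \<in> {0..L2} \<Longrightarrow> x > 0 \<Longrightarrow> v x > 0"
    using c by (meson less_le_trans mult_pos_pos)
  have X: "integral {0..L1} (\<lambda>x. v x * u x) > 0"
  proof (rule pos_int[of 0 L1 _ x0])
    show "0 < v x0 * u x0" using ux0 vpos[of x0] x0 x0p L by auto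
    show "\<And>x. x \<in> {0..L1} \<Longrightarrow> 0 \<le> v x * u x"
      using unn vnn L by (intro mult_nonneg_nonneg) auto
  qed (use uc vc x0 L in \<open>auto intro!: continuous_intros\<close>)
  define J where "J = integral {L1..L2} (\<lambda>y. y * v y)"
  have J: "J > 0" unfolding J_def
  proof (rule pos_int[of L1 L2 _ L2])
    show "continuous_on {L1..L2} (\<lambda>y. y * v y)"
      by (intro continuous_intros, rule continuous_on_subset[OF vc2]) (use L in auto)
  next
    fix y assume "y \<in> {L1..L2}" then show "0 \<le> y * v y" using vnn L by (intro mult_nonneg_nonneg) auto
  next
    show "0 < L2 * v L2" using vpos[of L2] L by auto
  qed (use L in auto)
  define P where "P x = integral {L1..L2} (\<lambda>y. K x y * v y)" for x
  have Peq: "P x = H L2 v x - H L1 v x" for x using H_split[OF vc2, of L1 x] L unfolding P_def by simp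
  have Peq': "P = (\<lambda>x. H L2 v x - H L1 v x)" using Peq by auto
  have Pc: "continuous_on {0..L1} P" unfolding Peq' by (intro continuous_on_diff H_cont vc2 vc)
  have Plow: "m * J * x \<le> P x" if x: "x \<in> {0..L1}" for x
  proof -
    have "integral {L1..L2} (\<lambda>y. (m * x) * (y * v y)) \<le> P x"
      unfolding P_def
    proof (rule integral_le)
      have vc': "continuous_on {L1..L2} v" by (rule continuous_on_subset[OF vc2]) (use L in auto)
      show "(\<lambda>y. m * x * (y * v y)) integrable_on {L1..L2}"
        by (intro integrable_continuous_interval continuous_intros vc')
      show "(\<lambda>y. K x y * v y) integrable_on {L1..L2}"
        by (intro integrable_continuous_interval continuous_intros Kx_cont vc')
      fix y assume y: "y \<in> {L1..L2}"
      have "m * x * y \<le> K x y" using m(2) x y L by auto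
      moreover have "v y \<ge> 0" using vnn[of y] y L by auto
      ultimately show "m * x * (y * v y) \<le> K x y * v y"
        by (metis mult.assoc mult_right_mono)
    qed
    moreover have "integral {L1..L2} (\<lambda>y. (m * x) * (y * v y)) = m * J * x"
      unfolding J_def by (simp only: integral_mult_right) (simp add: mult_ac)
    ultimately show ?thesis by linarith
  qed
  have Q: "integral {0..L1} (\<lambda>x. P x * u x) > 0"
  proof -
    have "integral {0..L1} (\<lambda>x. (m * J) * (x * u x)) \<le> integral {0..L1} (\<lambda>x. P x * u x)"
    proof (rule integral_le)
      show "(\<lambda>x. m * J * (x * u x)) integrable_on {0..L1}"
        by (intro integrable_continuous_interval continuous_intros uc)
      show "(\<lambda>x. P x * u x) integrable_on {0..L1}"
        by (intro integrable_continuous_interval continuous_intros uc Pc)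
      fix x assume x: "x \<in> {0..L1}"
      show "m * J * (x * u x) \<le> P x * u x"
        using mult_right_mono[OF Plow[OF x] unn[OF x]] by (simp add: algebra_simps)
    qed
    moreover have "integral {0..L1} (\<lambda>x. (m * J) * (x * u x)) > 0"
    proof -
      have "integral {0..L1} (\<lambda>x. x * u x) > 0"
        by (rule pos_int[of 0 L1 _ x0]) (use uc unn x0 ux0 x0p L in \<open>auto intro!: continuous_intros\<close>)
      then show ?thesis using m J by simp
    qed
    ultimately show ?thesis by linarith
  qed
  have "e2 * integral {0..L1} (\<lambda>x. v x * u x) = integral {0..L1} (\<lambda>x. H L2 v x * u x)"
  proof -
    have "integral {0..L1} (\<lambda>x. H L2 v x * u x) = integral {0..L1} (\<lambda>x. e2 * (v x * u x))"
      by (rule integral_cong) (use ev L in \<open>auto simp: eigen_def\<close>)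
    then show ?thesis by simp
  qed
  also have "\<dots> = integral {0..L1} (\<lambda>x. H L1 v x * u x + P x * u x)"
    by (rule integral_cong) (simp add: Peq algebra_simps)
  also have "\<dots> = integral {0..L1} (\<lambda>x. H L1 v x * u x) + integral {0..L1} (\<lambda>x. P x * u x)"
    by (rule integral_add) (intro integrable_continuous_interval continuous_intros uc Pc H_cont vc)+
  also have "integral {0..L1} (\<lambda>x. H L1 v x * u x) = integral {0..L1} (\<lambda>x. v x * H L1 u x)"
    by (rule H_sym[OF vc uc])
  also have "\<dots> = integral {0..L1} (\<lambda>x. e1 * (v x * u x))"
    by (rule integral_cong) (use eu in \<open>auto simp: eigen_def\<close>)
  also have "\<dots> = e1 * integral {0..L1} (\<lambda>x. v x * u x)" by simp
  finally have "e2 * integral {0..L1} (\<lambda>x. v x * u x) =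
      e1 * integral {0..L1} (\<lambda>x. v x * u x) + integral {0..L1} (\<lambda>x. P x * u x)" .
  with Q have "e1 * integral {0..L1} (\<lambda>x. v x * u x) < e2 * integral {0..L1} (\<lambda>x. v x * u x)" by linarith
  with X show ?thesis by simp
qed

end



lemma geom_cauchy:
  fixes a :: "nat \<Rightarrow> real"
  assumes q: "0 \<le> q" "q < 1" and d: "\<And>n. \<bar>a (Suc n) - a n\<bar> \<le> C * q ^ n"
  shows "\<exists>l. a \<longlonglongrightarrow> l \<and> (\<forall>n. \<bar>l - a n\<bar> \<le> C * q ^ n / (1 - q))"
proof -
  have C: "C \<ge> 0" using d[of 0] by simp
  have s: "summable (\<lambda>i. a (Suc i) - a i)"
    by (rule summable_comparison_test[where g="\<lambda>i. C * q ^ i"])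
       (use d q in \<open>auto intro!: summable_mult summable_geometric\<close>)
  have "(\<lambda>n. a 0 + (\<Sum>i<n. a (Suc i) - a i)) \<longlonglongrightarrow> a 0 + (\<Sum>i. a (Suc i) - a i)"
    by (intro tendsto_add tendsto_const summable_LIMSEQ s)
  then have lim: "a \<longlonglongrightarrow> a 0 + (\<Sum>i. a (Suc i) - a i)"
    by (simp add: sum_lessThan_telescope)
  define l where "l = a 0 + (\<Sum>i. a (Suc i) - a i)"
  have bnd: "\<bar>a (k + n) - a n\<bar> \<le> C * q ^ n * (1 - q ^ k) / (1 - q)" for k n
  proof (induction k)
    case 0 then show ?case by simp
  next
    case (Suc k)
    have "\<bar>a (Suc k + n) - a n\<bar> \<le> \<bar>a (k + n) - a n\<bar> + \<bar>a (Suc (k + n)) - a (k + n)\<bar>" by simp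
    also have "\<dots> \<le> C * q ^ n * (1 - q ^ k) / (1 - q) + C * q ^ (k + n)"
      using Suc d[of "k + n"] by linarith
    also have "\<dots> = C * q ^ n * (1 - q ^ Suc k) / (1 - q)"
      using q by (simp add: field_simps power_add)
    finally show ?case .
  qed
  have "\<bar>l - a n\<bar> \<le> C * q ^ n / (1 - q)" for n
  proof -
    have t: "(\<lambda>k. \<bar>a (k + n) - a n\<bar>) \<longlonglongrightarrow> \<bar>l - a n\<bar>"
      by (intro tendsto_rabs tendsto_diff tendsto_const LIMSEQ_ignore_initial_segment) (use lim l_def in simp)
    have "\<bar>a (k + n) - a n\<bar> \<le> C * q ^ n / (1 - q)" for k
    proof -
      have "0 \<le> C * q ^ n" using q C by simp
      moreover have "1 - q ^ k \<le> 1" using q by simp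
      ultimately have "C * q ^ n * (1 - q ^ k) \<le> C * q ^ n" using mult_left_mono[of "1 - q^k" 1 "C * q ^ n"] by simp
      then have "C * q ^ n * (1 - q ^ k) / (1 - q) \<le> C * q ^ n / (1 - q)"
        using q by (intro divide_right_mono) auto
      with bnd[of k n] show ?thesis by linarith
    qed
    then show ?thesis by (intro LIMSEQ_le_const2[OF t]) auto
  qed
  with lim l_def show ?thesis by auto
qed

context kern begin

lemma ratio_step:
  assumes L: "L > 0" and m: "m > 0" "\<forall>x y. 0 \<le> x \<longrightarrow> x \<le> L \<longrightarrow> 0 \<le> y \<longrightarrow> y \<le> L \<longrightarrow> m * x * y \<le> K x y"
    and M: "M > 0" "\<forall>x y. 0 \<le> x \<longrightarrow> x \<le> L \<longrightarrow> 0 \<le> y \<longrightarrow> y \<le> L \<longrightarrow> K x y \<le> M * x * y"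
    and fc: "continuous_on {0..L} f" and gc: "continuous_on {0..L} g"
    and gnn: "\<And>x. x \<in> {0..L} \<Longrightarrow> g x \<ge> 0"
    and \<Gamma>: "integral {0..L} (\<lambda>y. y * g y) > 0"
    and ab: "\<And>x. x \<in> {0..L} \<Longrightarrow> \<alpha> * g x \<le> f x \<and> f x \<le> \<beta> * g x"
  shows "\<exists>\<alpha>' \<beta>'. \<alpha> \<le> \<alpha>' \<and> \<beta>' \<le> \<beta> \<and> \<beta>' - \<alpha>' = (\<beta> - \<alpha>) * (1 - m / M) \<and>
           (\<forall>x\<in>{0..L}. \<alpha>' * H L g x \<le> H L f x \<and> H L f x \<le> \<beta>' * H L g x)"
proof -
  define \<Gamma> where "\<Gamma> = integral {0..L} (\<lambda>y. y * g y)"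
  define A where "A = integral {0..L} (\<lambda>y. y * (f y - \<alpha> * g y))"
  define B where "B = integral {0..L} (\<lambda>y. y * (\<beta> * g y - f y))"
  have G0: "\<Gamma> > 0" using \<Gamma> unfolding \<Gamma>_def .
  have c1: "continuous_on {0..L} (\<lambda>y. f y - \<alpha> * g y)" by (intro continuous_intros fc gc)
  have c2: "continuous_on {0..L} (\<lambda>y. \<beta> * g y - f y)" by (intro continuous_intros fc gc)
  have n1: "\<And>y. y \<in> {0..L} \<Longrightarrow> f y - \<alpha> * g y \<ge> 0" using ab by auto
  have n2: "\<And>y. y \<in> {0..L} \<Longrightarrow> \<beta> * g y - f y \<ge> 0" using ab by auto
  have A0: "A \<ge> 0" unfolding A_def
    by (rule integral_nonneg) (use n1 c1 in \<open>auto intro!: integrable_continuous_interval continuous_intros\<close>)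
  have B0: "B \<ge> 0" unfolding B_def
    by (rule integral_nonneg) (use n2 c2 in \<open>auto intro!: integrable_continuous_interval continuous_intros\<close>)
  have AB: "A + B = (\<beta> - \<alpha>) * \<Gamma>"
  proof -
    have "A + B = integral {0..L} (\<lambda>y. y * (f y - \<alpha> * g y) + y * (\<beta> * g y - f y))"
      unfolding A_def B_def
      by (rule integral_add[symmetric]) (intro integrable_continuous_interval continuous_intros fc gc)+
    also have "\<dots> = integral {0..L} (\<lambda>y. (\<beta> - \<alpha>) * (y * g y))"
      by (rule integral_cong) (simp add: algebra_simps)
    finally show ?thesis unfolding \<Gamma>_def by simp
  qed
  define \<alpha>' where "\<alpha>' = \<alpha> + m * A / (M * \<Gamma>)"
  define \<beta>' where "\<beta>' = \<beta> - m * B / (M * \<Gamma>)"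
  have "\<alpha> \<le> \<alpha>'" unfolding \<alpha>'_def using m M G0 A0 by simp
  moreover have "\<beta>' \<le> \<beta>" unfolding \<beta>'_def using m M G0 B0 by simp
  moreover have "\<beta>' - \<alpha>' = (\<beta> - \<alpha>) * (1 - m / M)"
  proof -
    have "\<beta>' - \<alpha>' = \<beta> - \<alpha> - m * (A + B) / (M * \<Gamma>)" unfolding \<alpha>'_def \<beta>'_def using M G0 by (simp add: field_simps)
    also have "\<dots> = (\<beta> - \<alpha>) * (1 - m / M)" unfolding AB using G0 M by (simp add: field_simps)
    finally show ?thesis .
  qed
  moreover have "\<alpha>' * H L g x \<le> H L f x \<and> H L f x \<le> \<beta>' * H L g x" if x: "x \<in> {0..L}" for x
  proof -
    have Hg: "H L g x \<le> M * x * \<Gamma>" unfolding \<Gamma>_def by (rule H_upper[OF M(2) gc gnn x])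
    have h1: "m * x * A \<le> H L (\<lambda>y. f y - \<alpha> * g y) x" unfolding A_def by (rule H_lower[OF m(2) c1 n1 x])
    have h2: "m * x * B \<le> H L (\<lambda>y. \<beta> * g y - f y) x" unfolding B_def by (rule H_lower[OF m(2) c2 n2 x])
    have e1: "H L (\<lambda>y. f y - \<alpha> * g y) x = H L f x - \<alpha> * H L g x"
    proof -
      have gs: "continuous_on {0..L} (\<lambda>y. \<alpha> * g y)" by (intro continuous_intros gc)
      show ?thesis using H_diff[OF fc gs, where x=x] H_scale[of L \<alpha> g x] by simp
    qed
    have e2: "H L (\<lambda>y. \<beta> * g y - f y) x = \<beta> * H L g x - H L f x"
    proof -
      have gs: "continuous_on {0..L} (\<lambda>y. \<beta> * g y)" by (intro continuous_intros gc)
      show ?thesis using H_diff[OF gs fc, where x=x] H_scale[of L \<beta> g x] by simp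
    qed
    have k1: "m * A / (M * \<Gamma>) * H L g x \<le> m * x * A"
    proof -
      have "m * A / (M * \<Gamma>) * H L g x \<le> m * A / (M * \<Gamma>) * (M * x * \<Gamma>)"
        using Hg m M G0 A0 by (intro mult_left_mono) auto
      also have "\<dots> = m * x * A" using M G0 by (simp add: field_simps)
      finally show ?thesis .
    qed
    have k2: "m * B / (M * \<Gamma>) * H L g x \<le> m * x * B"
    proof -
      have "m * B / (M * \<Gamma>) * H L g x \<le> m * B / (M * \<Gamma>) * (M * x * \<Gamma>)"
        using Hg m M G0 B0 by (intro mult_left_mono) auto
      also have "\<dots> = m * x * B" using M G0 by (simp add: field_simps)
      finally show ?thesis .
    qed
    have "\<alpha>' * H L g x = \<alpha> * H L g x + m * A / (M * \<Gamma>) * H L g x" unfolding \<alpha>'_def by (simp add: algebra_simps)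
    moreover have "\<beta>' * H L g x = \<beta> * H L g x - m * B / (M * \<Gamma>) * H L g x" unfolding \<beta>'_def by (simp add: algebra_simps)
    ultimately show ?thesis using k1 k2 h1 h2 e1 e2 by linarith
  qed
  ultimately show ?thesis by blast
qed

end


context kern begin

lemma eigen_to_pos:
  assumes L: "L > 0" and eig: "eigen L e u"
  shows "pos_eigenvalue G L e"
proof -
  have e: "e > 0" using eigen_props(1)[OF L eig] .
  have uc: "continuous_on {0..L} u" and u0: "u 0 = 0" and unn: "\<forall>x\<in>{0..L}. u x \<ge> 0"
    and eq: "\<forall>x\<in>{0..L}. e * u x = H L u x" using eig unfolding eigen_def by auto
  obtain x0 where x0: "x0 \<in> {0..L}" "u x0 \<noteq> 0" using eig unfolding eigen_def by auto
  define u' where "u' x = H L u x / e" for x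
  have same: "\<And>x. x \<in> {0..L} \<Longrightarrow> u' x = u x" unfolding u'_def using eq e by (simp add: field_simps)
  obtain D where D: "\<forall>x\<in>{0..L}. (H L u has_real_derivative D x) (at x within {0..L})" "continuous_on {0..L} D"
    using H_C1[OF uc] unfolding C1_on_interval_def by blast
  have "C1_on_interval L u'"
    unfolding C1_on_interval_def
  proof (intro exI[of _ "\<lambda>x. D x / e"] conjI ballI)
    fix x assume x: "x \<in> {0..L}"
    have "(H L u has_real_derivative D x) (at x within {0..L})" using D(1) x by blast
    from DERIV_cdivide[OF this, of e]
    show "(u' has_real_derivative D x / e) (at x within {0..L})"
      unfolding u'_def .
  next
    show "continuous_on {0..L} (\<lambda>x. D x / e)" using e by (intro continuous_intros D(2)) auto
  qed
  moreover have "u' 0 = 0" unfolding u'_def by (simp add: H_zero)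
  moreover have "\<forall>x\<in>{0..L}. u' x \<ge> 0" using same unn by auto
  moreover have "\<exists>x\<in>{0..L}. u' x \<noteq> 0" using same x0 by auto
  moreover have "\<forall>x\<in>{0..L}. e * u' x = H_op G L u' x"
  proof
    fix x assume x: "x \<in> {0..L}"
    have "H_op G L u' x = H L u x" unfolding H_eq by (rule H_ext) (use same in auto)
    then show "e * u' x = H_op G L u' x" using same[OF x] eq x by auto
  qed
  ultimately show ?thesis unfolding pos_eigenvalue_def X_space_def by blast
qed

end


context kern begin

lemma exists_eigen:
  assumes L: "L > 0"
  shows "\<exists>e w. eigen L e w"
proof -
  obtain m where m: "m > 0" "\<forall>x y. 0 \<le> x \<longrightarrow> x \<le> L \<longrightarrow> 0 \<le> y \<longrightarrow> y \<le> L \<longrightarrow> m * x * y \<le> K x y"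
    using K_lower[OF L] by blast
  obtain M where M: "M > 0" "\<forall>x y. 0 \<le> x \<longrightarrow> x \<le> L \<longrightarrow> 0 \<le> y \<longrightarrow> y \<le> L \<longrightarrow> K x y \<le> M * x * y"
    using K_upper[of L] L by auto
  have mM: "m \<le> M"
  proof -
    have "m * L * L \<le> K L L" using m(2) L by auto
    moreover have "K L L \<le> M * L * L" using M(2) L by auto
    ultimately have "m * L * L \<le> M * L * L" by linarith
    then show ?thesis using L by (simp add: mult.assoc)
  qed
  define q where "q = 1 - m / M"
  have q: "0 \<le> q" "q < 1" unfolding q_def using m M mM by (auto simp: field_simps)
  define u where "u n = (H L ^^ n) (\<lambda>x. x)" for n
  have u_Suc: "u (Suc n) = H L (u n)" for n unfolding u_def by simp
  have u0: "u 0 = (\<lambda>x. x)" unfolding u_def by simp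
  have uc: "continuous_on {0..L} (u n)" for n
    by (induction n) (auto simp: u0 u_Suc intro: H_cont continuous_on_id)
  have uzero: "u n 0 = 0" for n by (cases n) (auto simp: u0 u_Suc H_zero)
  have upos: "\<exists>a>0. \<forall>x\<in>{0..L}. a * x \<le> u n x" for n
  proof (induction n)
    case 0 show ?case by (rule exI[of _ 1]) (simp add: u0)
  next
    case (Suc n)
    then obtain a where a: "a > 0" "\<forall>x\<in>{0..L}. a * x \<le> u n x" by blast
    have nn: "u n y \<ge> 0" if y: "y \<in> {0..L}" for y
    proof -
      have "0 \<le> a * y" using a y by simp
      then show ?thesis using a(2) y by fastforce
    qed
    define I where "I = integral {0..L} (\<lambda>y. y * u n y)"
    have I: "I > 0" unfolding I_def
    proof (rule pos_int[of 0 L _ L])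
      have "a * L \<le> u n L" using a L by auto
      moreover have "a * L > 0" using a L by simp
      ultimately show "0 < L * u n L" using L by (intro mult_pos_pos) auto
    qed (use uc nn L in \<open>auto intro!: continuous_intros mult_nonneg_nonneg\<close>)
    show ?case
    proof (intro exI[of _ "m * I"] conjI ballI)
      show "m * I > 0" using m I by simp
      fix x assume x: "x \<in> {0..L}"
      have "m * x * I \<le> u (Suc n) x" unfolding u_Suc I_def by (rule H_lower[OF m(2) uc nn x])
      then show "m * I * x \<le> u (Suc n) x" by (simp add: mult_ac)
    qed
  qed
  have unn: "\<And>n y. y \<in> {0..L} \<Longrightarrow> u n y \<ge> 0"
  proof -
    fix n y assume y: "y \<in> {0..L}"
    obtain a where a: "a > 0" "\<forall>x\<in>{0..L}. a * x \<le> u n x" using upos by blast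
    have "0 \<le> a * y" using a y by simp
    then show "u n y \<ge> 0" using a(2) y by fastforce
  qed
  have uL: "u n L > 0" for n
  proof -
    obtain a where a: "a > 0" "\<forall>x\<in>{0..L}. a * x \<le> u n x" using upos by blast
    then have "a * L \<le> u n L" using L by auto
    moreover have "a * L > 0" using a L by simp
    ultimately show ?thesis by linarith
  qed
  define I0 where "I0 = integral {0..L} (\<lambda>y. y * u 0 y)"
  have I0: "I0 > 0" unfolding I0_def
    by (rule pos_int[of 0 L _ L]) (use L uc unn uL in \<open>auto intro!: continuous_intros mult_nonneg_nonneg mult_pos_pos\<close>)
  define \<alpha>0 where "\<alpha>0 = m * I0"
  define D where "D = (M - m) * I0"
  have \<alpha>0: "\<alpha>0 > 0" unfolding \<alpha>0_def using m I0 by simp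
  have D: "D \<ge> 0" unfolding D_def using mM I0 by simp
  define P where "P n p \<longleftrightarrow> (\<forall>x\<in>{0..L}. fst p * u n x \<le> u (Suc n) x \<and> u (Suc n) x \<le> snd p * u n x)
       \<and> snd p - fst p = D * q ^ n \<and> \<alpha>0 \<le> fst p" for n p
  have "\<exists>ab. \<forall>n. P n (ab n) \<and> (fst (ab n) \<le> fst (ab (Suc n)) \<and> snd (ab (Suc n)) \<le> snd (ab n))"
  proof (rule dependent_nat_choice)
    show "\<exists>p. P 0 p"
    proof (intro exI[of _ "(\<alpha>0, M * I0)"])
      have "\<forall>x\<in>{0..L}. \<alpha>0 * u 0 x \<le> u (Suc 0) x \<and> u (Suc 0) x \<le> M * I0 * u 0 x"
      proof
        fix x assume x: "x \<in> {0..L}"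
        have "m * x * I0 \<le> u (Suc 0) x" unfolding u_Suc I0_def by (rule H_lower[OF m(2) uc unn x])
        moreover have "u (Suc 0) x \<le> M * x * I0" unfolding u_Suc I0_def by (rule H_upper[OF M(2) uc unn x])
        ultimately show "\<alpha>0 * u 0 x \<le> u (Suc 0) x \<and> u (Suc 0) x \<le> M * I0 * u 0 x"
          unfolding \<alpha>0_def by (simp add: u0 mult_ac)
      qed
      then show "P 0 (\<alpha>0, M * I0)" unfolding P_def D_def \<alpha>0_def by (simp add: algebra_simps)
    qed
  next
    fix p n assume Pn: "P n p"
    have \<Gamma>: "integral {0..L} (\<lambda>y. y * u n y) > 0"
      by (rule pos_int[of 0 L _ L]) (use L uc unn uL in \<open>auto intro!: continuous_intros mult_nonneg_nonneg mult_pos_pos\<close>)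
    have ab: "\<And>x. x \<in> {0..L} \<Longrightarrow> fst p * u n x \<le> u (Suc n) x \<and> u (Suc n) x \<le> snd p * u n x"
      using Pn unfolding P_def by auto
    obtain \<alpha>' \<beta>' where st: "fst p \<le> \<alpha>'" "\<beta>' \<le> snd p" "\<beta>' - \<alpha>' = (snd p - fst p) * (1 - m / M)"
      "\<forall>x\<in>{0..L}. \<alpha>' * H L (u n) x \<le> H L (u (Suc n)) x \<and> H L (u (Suc n)) x \<le> \<beta>' * H L (u n) x"
      using ratio_step[OF L m M uc uc unn \<Gamma> ab] by blast
    show "\<exists>p'. P (Suc n) p' \<and> (fst p \<le> fst p' \<and> snd p' \<le> snd p)"
    proof (intro exI[of _ "(\<alpha>', \<beta>')"] conjI)
      have gn: "snd p - fst p = D * q ^ n" "\<alpha>0 \<le> fst p" using Pn unfolding P_def by auto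
      have c1: "\<forall>x\<in>{0..L}. \<alpha>' * u (Suc n) x \<le> u (Suc (Suc n)) x \<and> u (Suc (Suc n)) x \<le> \<beta>' * u (Suc n) x"
        using st(4) unfolding u_Suc[of "Suc n"] u_Suc[of n] by blast
      have "\<beta>' - \<alpha>' = D * q ^ n * q" using st(3) gn(1) unfolding q_def by simp
      then have c2: "\<beta>' - \<alpha>' = D * q ^ Suc n" by (simp add: mult_ac)
      have c3: "\<alpha>0 \<le> \<alpha>'" using gn(2) st(1) by linarith
      show "P (Suc n) (\<alpha>', \<beta>')"
        unfolding P_def fst_conv snd_conv using c1 c2 c3 by blast
    qed (use st in simp_all)
  qed
  then obtain ab where ab: "\<And>n. P n (ab n)" "\<And>n. fst (ab n) \<le> fst (ab (Suc n))" "\<And>n. snd (ab (Suc n)) \<le> snd (ab n)"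
    by blast
  define \<alpha> where "\<alpha> n = fst (ab n)" for n
  define \<beta> where "\<beta> n = snd (ab n)" for n
  have bnd: "\<And>n x. x \<in> {0..L} \<Longrightarrow> \<alpha> n * u n x \<le> u (Suc n) x \<and> u (Suc n) x \<le> \<beta> n * u n x"
    using ab(1) unfolding P_def \<alpha>_def \<beta>_def by auto
  have gap: "\<beta> n - \<alpha> n = D * q ^ n" for n using ab(1)[of n] unfolding P_def \<alpha>_def \<beta>_def by auto
  have \<alpha>ge: "\<alpha>0 \<le> \<alpha> n" for n using ab(1)[of n] unfolding P_def \<alpha>_def by auto
  have inc: "incseq \<alpha>" unfolding \<alpha>_def by (rule incseq_SucI) (use ab(2) in auto)
  have dec: "decseq \<beta>" unfolding \<beta>_def by (rule decseq_SucI) (use ab(3) in auto)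
  have ab_le: "\<alpha> n \<le> \<beta> n" for n
  proof -
    have "D * q ^ n \<ge> 0" using D q by simp
    then show ?thesis using gap[of n] by linarith
  qed
  have ab_le2: "\<alpha> k \<le> \<beta> n" for k n
  proof (cases "k \<le> n")
    case True
    have "\<alpha> k \<le> \<alpha> n" using inc True unfolding incseq_def by blast
    then show ?thesis using ab_le[of n] by linarith
  next
    case False
    have "\<beta> k \<le> \<beta> n" using dec False unfolding decseq_def by simp
    then show ?thesis using ab_le[of k] by linarith
  qed
  obtain lam where lam: "\<alpha> \<longlonglongrightarrow> lam" "\<And>i. \<alpha> i \<le> lam"
    using incseq_convergent[OF inc, of "\<beta> 0"] ab_le2 by blast
  have lam_le: "lam \<le> \<beta> n" for n by (rule LIMSEQ_le_const2[OF lam(1)]) (use ab_le2 in auto)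
  have lam_pos: "lam > 0" using \<alpha>0 \<alpha>ge[of 0] lam(2)[of 0] by linarith
  have lam_ge: "\<alpha> n \<le> lam" for n using lam(2) .
  define v where "v n x = u n x / u n L" for n x
  define r where "r n = u (Suc n) L / u n L" for n
  have r_bnd: "\<alpha> n \<le> r n \<and> r n \<le> \<beta> n" for n
  proof -
    have "\<alpha> n * u n L \<le> u (Suc n) L" "u (Suc n) L \<le> \<beta> n * u n L" using bnd[of L n] L by auto
    then show ?thesis unfolding r_def using uL[of n] by (simp add: field_simps)
  qed
  have r_ge: "\<alpha>0 \<le> r n" for n using r_bnd[of n] \<alpha>ge[of n] by linarith
  have vnn: "v n x \<ge> 0" if "x \<in> {0..L}" for n x unfolding v_def using unn[OF that] uL[of n] by simp
  have vL: "v n L = 1" for n unfolding v_def using uL[of n] by simp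
  have v0: "v n 0 = 0" for n unfolding v_def using uzero by simp
  have vc: "continuous_on {0..L} (v n)" for n unfolding v_def using uL[of n] by (intro continuous_intros uc) auto
  define \<epsilon> where "\<epsilon> n = D * q ^ n / \<alpha>0" for n
  have \<epsilon>nn: "\<epsilon> n \<ge> 0" for n unfolding \<epsilon>_def using D q \<alpha>0 by simp
  have step: "\<bar>v (Suc n) x - v n x\<bar> \<le> \<epsilon> n * v n x" if x: "x \<in> {0..L}" for n x
  proof -
    have uLs: "u (Suc n) L = r n * u n L" unfolding r_def using uL[of n] by simp
    have rp: "r n > 0" using r_ge[of n] \<alpha>0 by linarith
    have e1: "v (Suc n) x - v n x = (u (Suc n) x - r n * u n x) / u (Suc n) L"
      unfolding v_def uLs using uL[of n] rp by (simp add: field_simps)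
    have b1: "\<alpha> n * u n x \<le> u (Suc n) x" "u (Suc n) x \<le> \<beta> n * u n x" using bnd[OF x, of n] by auto
    have b2: "\<alpha> n * u n x \<le> r n * u n x" "r n * u n x \<le> \<beta> n * u n x"
      using r_bnd[of n] unn[OF x, of n] by (auto intro: mult_right_mono)
    have e2: "\<bar>u (Suc n) x - r n * u n x\<bar> \<le> (\<beta> n - \<alpha> n) * u n x"
      using b1 b2 by (simp add: left_diff_distrib abs_le_iff)
    have "\<bar>v (Suc n) x - v n x\<bar> = \<bar>u (Suc n) x - r n * u n x\<bar> / u (Suc n) L"
      unfolding e1 using uL[of "Suc n"] by simp
    also have "\<dots> \<le> (\<beta> n - \<alpha> n) * u n x / u (Suc n) L"
      using e2 uL[of "Suc n"] by (intro divide_right_mono) auto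
    also have "\<dots> = (\<beta> n - \<alpha> n) / r n * v n x"
      unfolding v_def uLs using uL[of n] rp by (simp add: field_simps)
    also have "\<dots> \<le> (\<beta> n - \<alpha> n) / \<alpha>0 * v n x"
    proof (rule mult_right_mono)
      show "(\<beta> n - \<alpha> n) / r n \<le> (\<beta> n - \<alpha> n) / \<alpha>0"
        using ab_le[of n] r_ge[of n] \<alpha>0 by (intro divide_left_mono) auto
    qed (use vnn[OF x] in auto)
    also have "\<dots> = \<epsilon> n * v n x" unfolding \<epsilon>_def gap ..
    finally show ?thesis .
  qed
  define E where "E = D / (\<alpha>0 * (1 - q))"
  have Esum: "(\<Sum>k<n. \<epsilon> k) \<le> E" for n
  proof -
    have "(\<Sum>k<n. \<epsilon> k) = D / \<alpha>0 * (\<Sum>k<n. q ^ k)" unfolding \<epsilon>_def sum_distrib_left by simp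
    also have "(\<Sum>k<n. q ^ k) = (1 - q ^ n) / (1 - q)" using sum_gp_strict[of q n] q by simp
    also have "D / \<alpha>0 * ((1 - q ^ n) / (1 - q)) \<le> D / \<alpha>0 * (1 / (1 - q))"
      using q D \<alpha>0 by (intro mult_left_mono divide_right_mono) auto
    also have "\<dots> = E" unfolding E_def by simp
    finally show ?thesis .
  qed
  have vbound0: "v n x \<le> exp (\<Sum>k<n. \<epsilon> k)" if x: "x \<in> {0..L}" for n x
  proof (induction n)
    case 0 show ?case unfolding v_def using x L by (simp add: u0)
  next
    case (Suc n)
    have "v (Suc n) x \<le> (1 + \<epsilon> n) * v n x" using step[OF x, of n] by (simp add: algebra_simps abs_le_iff)
    also have "\<dots> \<le> exp (\<epsilon> n) * v n x" using vnn[OF x, of n] by (intro mult_right_mono) auto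
    also have "\<dots> \<le> exp (\<epsilon> n) * exp (\<Sum>k<n. \<epsilon> k)" using Suc by (intro mult_left_mono) auto
    also have "\<dots> = exp (\<Sum>k<Suc n. \<epsilon> k)" by (simp add: exp_add[symmetric] add.commute)
    finally show ?case .
  qed
  have vbound: "v n x \<le> exp E" if x: "x \<in> {0..L}" for n x
    using vbound0[OF x, of n] Esum[of n] by (meson exp_le_cancel_iff order.trans)
  define C where "C = D / \<alpha>0 * exp E"
  have dstep: "\<bar>v (Suc n) x - v n x\<bar> \<le> C * q ^ n" if x: "x \<in> {0..L}" for n x
  proof -
    have "\<bar>v (Suc n) x - v n x\<bar> \<le> \<epsilon> n * v n x" by (rule step[OF x])
    also have "\<dots> \<le> \<epsilon> n * exp E" using vbound[OF x] \<epsilon>nn by (intro mult_left_mono) auto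
    also have "\<dots> = C * q ^ n" unfolding \<epsilon>_def C_def by simp
    finally show ?thesis .
  qed
  define w where "w x = lim (\<lambda>n. v n x)" for x
  have wlim: "(\<lambda>n. v n x) \<longlonglongrightarrow> w x \<and> (\<forall>n. \<bar>w x - v n x\<bar> \<le> C * q ^ n / (1 - q))" if x: "x \<in> {0..L}" for x
  proof -
    obtain l where l: "(\<lambda>n. v n x) \<longlonglongrightarrow> l" "\<forall>n. \<bar>l - v n x\<bar> \<le> C * q ^ n / (1 - q)"
      using geom_cauchy[OF q, of "\<lambda>n. v n x" C] dstep[OF x] by blast
    have "w x = l" unfolding w_def by (rule limI[OF l(1)])
    then show ?thesis using l by simp
  qed
  have bnd0: "(\<lambda>n. C * q ^ n / (1 - q)) \<longlonglongrightarrow> 0"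
  proof -
    have "(\<lambda>n. C * q ^ n / (1 - q)) \<longlonglongrightarrow> C * 0 / (1 - q)"
      using q by (intro tendsto_intros) auto
    then show ?thesis by simp
  qed
  have wc: "continuous_on {0..L} w"
  proof (rule uniform_limit_theorem[where F=sequentially and f=v])
    show "\<forall>\<^sub>F n in sequentially. continuous_on {0..L} (v n)" using vc by simp
    show "uniform_limit {0..L} v w sequentially"
    proof (rule uniform_limitI)
      fix e :: real assume e: "e > 0"
      have "\<forall>\<^sub>F n in sequentially. C * q ^ n / (1 - q) < e" using order_tendstoD(2)[OF bnd0 e] .
      then show "\<forall>\<^sub>F n in sequentially. \<forall>x\<in>{0..L}. dist (v n x) (w x) < e"
      proof (rule eventually_mono)
        fix n assume n: "C * q ^ n / (1 - q) < e"
        show "\<forall>x\<in>{0..L}. dist (v n x) (w x) < e"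
        proof
          fix x assume x: "x \<in> {0..L}"
          have "\<bar>w x - v n x\<bar> \<le> C * q ^ n / (1 - q)" using wlim[OF x] by blast
          then show "dist (v n x) (w x) < e" using n by (simp add: dist_real_def abs_minus_commute)
        qed
      qed
    qed
  qed simp
  have Hv: "H L (v n) x = r n * v (Suc n) x" if x: "x \<in> {0..L}" for n x
  proof -
    have "v n = (\<lambda>y. (1 / u n L) * u n y)" unfolding v_def by (simp add: fun_eq_iff)
    then have "H L (v n) x = (1 / u n L) * u (Suc n) x" using H_scale[of L "1 / u n L" "u n" x] u_Suc by simp
    also have "\<dots> = r n * v (Suc n) x" unfolding r_def v_def using uL[of n] uL[of "Suc n"] by simp
    finally show ?thesis .
  qed
  have \<beta>lim: "\<beta> \<longlonglongrightarrow> lam"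
  proof -
    have "(\<lambda>n. \<alpha> n + D * q ^ n) \<longlonglongrightarrow> lam + D * 0" using q by (intro tendsto_intros lam(1)) auto
    moreover have "\<beta> = (\<lambda>n. \<alpha> n + D * q ^ n)" using gap by (auto simp: fun_eq_iff algebra_simps)
    ultimately show ?thesis by simp
  qed
  have rlim: "r \<longlonglongrightarrow> lam"
    by (rule tendsto_sandwich[of \<alpha> r sequentially \<beta>]) (use r_bnd lam(1) \<beta>lim in auto)
  have Kb: "\<forall>x y. 0 \<le> x \<longrightarrow> x \<le> L \<longrightarrow> 0 \<le> y \<longrightarrow> y \<le> L \<longrightarrow> K x y \<le> M * L * L"
  proof (intro allI impI)
    fix x y assume xy: "0 \<le> x" "x \<le> L" "0 \<le> y" "y \<le> L"
    have "M * x * y \<le> M * L * L" using xy M by (intro mult_mono) auto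
    then show "K x y \<le> M * L * L" using M(2) xy by force
  qed
  have eig: "lam * w x = H L w x" if x: "x \<in> {0..L}" for x
  proof -
    have "(\<lambda>n. H L (v n) x - H L w x) \<longlonglongrightarrow> 0"
    proof (rule Lim_null_comparison)
      show "\<forall>\<^sub>F n in sequentially. norm (H L (v n) x - H L w x) \<le> M * L * L * (C * q ^ n / (1 - q)) * L"
      proof (rule always_eventually, rule allI)
        fix n
        have "\<bar>H L (v n) x - H L w x\<bar> \<le> M * L * L * (C * q ^ n / (1 - q)) * L"
        proof (rule H_approx[OF Kb vc wc _ x])
          fix y assume y: "y \<in> {0..L}"
          show "\<bar>v n y - w y\<bar> \<le> C * q ^ n / (1 - q)" using wlim[OF y] by (simp add: abs_minus_commute)
        qed (use L in auto)
        then show "norm (H L (v n) x - H L w x) \<le> M * L * L * (C * q ^ n / (1 - q)) * L" by simp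
      qed
      show "(\<lambda>n. M * L * L * (C * q ^ n / (1 - q)) * L) \<longlonglongrightarrow> 0"
        using tendsto_mult[OF tendsto_mult[OF tendsto_const bnd0] tendsto_const, of "M * L * L" L] by simp
    qed
    then have "(\<lambda>n. (H L (v n) x - H L w x) + H L w x) \<longlonglongrightarrow> 0 + H L w x" by (intro tendsto_add) auto
    then have l1: "(\<lambda>n. H L (v n) x) \<longlonglongrightarrow> H L w x" by simp
    have "(\<lambda>n. r n * v (Suc n) x) \<longlonglongrightarrow> lam * w x"
      by (intro tendsto_mult rlim LIMSEQ_Suc[of "\<lambda>n. v n x"]) (use wlim[OF x] in blast)
    then have l2: "(\<lambda>n. H L (v n) x) \<longlonglongrightarrow> lam * w x" using Hv[OF x] by simp
    show ?thesis using LIMSEQ_unique[OF l2 l1] .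
  qed
  have w0: "w 0 = 0"
  proof -
    have "(\<lambda>n. v n 0) \<longlonglongrightarrow> w 0" using wlim[of 0] L by auto
    moreover have "(\<lambda>n. v n 0) = (\<lambda>n. 0)" using v0 by simp
    ultimately have "(\<lambda>n. 0::real) \<longlonglongrightarrow> w 0" by simp
    then show ?thesis using LIMSEQ_unique[OF tendsto_const] by metis
  qed
  have wL: "w L = 1"
  proof -
    have "(\<lambda>n. v n L) \<longlonglongrightarrow> w L" using wlim[of L] L by auto
    moreover have "(\<lambda>n. v n L) = (\<lambda>n. 1)" using vL by simp
    ultimately have "(\<lambda>n. 1::real) \<longlonglongrightarrow> w L" by simp
    then show ?thesis using LIMSEQ_unique[OF tendsto_const] by metis
  qed
  have wnn: "w x \<ge> 0" if x: "x \<in> {0..L}" for x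
    by (rule LIMSEQ_le_const[of "\<lambda>n. v n x"]) (use wlim[OF x] vnn[OF x] in auto)
  have Lin: "L \<in> {0..L}" using L by simp
  have "\<exists>x\<in>{0..L}. w x \<noteq> 0" using Lin wL by force
  then have "eigen L lam w"
    unfolding eigen_def using wc w0 wnn eig by blast
  then show ?thesis by blast
qed

end


context kern begin

lemma G_int_UNIV: "integral UNIV G = 1" using int1 by (rule integral_unique)

lemma G_integrable_ivl: "G integrable_on {a..b}"
  by (rule integrable_continuous_interval) (rule continuous_on_subset[OF contG], simp)

lemma G_int_le1: "integral {a..b} G \<le> 1"
proof -
  have "integral {a..b} G \<le> integral UNIV G"
    by (rule integral_subset_le) (use int1 G_integrable_ivl nonneg in auto)
  then show ?thesis using G_int_UNIV by simp
qed

lemma G_int_minus: "integral {0..L} (\<lambda>y. G (x - y)) = integral {x - L..x} G"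
proof -
  have "integral {0..L} (\<lambda>y. G (x - y)) = integral {-L..0} (\<lambda>z. G (x + z))"
    using Henstock_Kurzweil_Integration.integral_reflect_real[of 0 "-L" "\<lambda>z. G (x + z)"] by simp
  also have "\<dots> = integral {-L + x..0 + x} G"
    using integral_shift_Icc_real[of "-L" 0 G x] by (simp add: o_def)
  finally show ?thesis by simp
qed

lemma G_int_plus: "integral {0..L} (\<lambda>y. G (x + y)) = integral {x..L + x} G"
  using integral_shift_Icc_real[of 0 L G x] by (simp add: o_def add.commute)

lemma Kint_eq: "integral {0..L} (\<lambda>y. K x y) = integral {x - L..x} G - integral {x..L + x} G"
proof -
  have "integral {0..L} (\<lambda>y. K x y) = integral {0..L} (\<lambda>y. G (x - y)) - integral {0..L} (\<lambda>y. G (x + y))"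
    unfolding K_def
    by (rule integral_diff; rule integrable_continuous_interval; intro continuous_on_compose2[OF contG] continuous_intros) auto
  then show ?thesis using G_int_minus G_int_plus by simp
qed

lemma Kint_le1: "integral {0..L} (\<lambda>y. K x y) \<le> 1"
proof -
  have "integral {x..L + x} G \<ge> 0" by (rule integral_nonneg) (use G_integrable_ivl nonneg in auto)
  then show ?thesis using Kint_eq[of L x] G_int_le1[of "x - L" x] by linarith
qed

lemma eigen_le1:
  assumes L: "L > 0" and eig: "eigen L e u"
  shows "e \<le> 1"
proof -
  have uc: "continuous_on {0..L} u" and unn: "\<forall>x\<in>{0..L}. u x \<ge> 0"
    and eq: "\<forall>x\<in>{0..L}. e * u x = H L u x" using eig unfolding eigen_def by auto
  obtain x0 where x0: "x0 \<in> {0..L}" "u x0 \<noteq> 0" using eig unfolding eigen_def by auto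
  have "\<exists>z\<in>{0..L}. \<forall>y\<in>{0..L}. u y \<le> u z"
    by (rule continuous_attains_sup) (use uc L in auto)
  then obtain z where z: "z \<in> {0..L}" "\<And>y. y \<in> {0..L} \<Longrightarrow> u y \<le> u z" by blast
  have uz: "u z > 0" using z(2)[OF x0(1)] x0 unn by force
  have "e * u z = H L u z" using eq z by auto
  also have "\<dots> \<le> integral {0..L} (\<lambda>y. K z y * u z)"
    unfolding H_def
  proof (rule integral_le)
    show "(\<lambda>y. K z y * u y) integrable_on {0..L}" by (rule H_integrable[OF uc])
    show "(\<lambda>y. K z y * u z) integrable_on {0..L}"
      by (intro integrable_continuous_interval continuous_intros Kx_cont)
    fix y assume y: "y \<in> {0..L}"
    show "K z y * u y \<le> K z y * u z" using K_nonneg[of z y] z y by (intro mult_left_mono) (auto intro: z(2))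
  qed
  also have "\<dots> = integral {0..L} (\<lambda>y. K z y) * u z" by simp
  also have "\<dots> \<le> 1 * u z" using Kint_le1[of L z] uz by (intro mult_right_mono) auto
  finally show ?thesis using uz by simp
qed

end



lemma CS_int:
  fixes f :: "real \<Rightarrow> real"
  assumes f: "continuous_on {0..L} f" and L: "L > 0"
  shows "(integral {0..L} f)^2 \<le> L * integral {0..L} (\<lambda>x. f x * f x)"
proof -
  define c where "c = integral {0..L} f / L"
  have "0 \<le> integral {0..L} (\<lambda>x. (f x - c) * (f x - c))"
    by (rule integral_nonneg) (use f in \<open>auto intro!: integrable_continuous_interval continuous_intros\<close>)
  also have "integral {0..L} (\<lambda>x. (f x - c) * (f x - c)) =
      integral {0..L} (\<lambda>x. f x * f x) - 2 * c * integral {0..L} f + c * c * L"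
  proof -
    have i1: "(\<lambda>x. f x * f x) integrable_on {0..L}" by (intro integrable_continuous_interval continuous_intros f)
    have i2: "(\<lambda>x. 2 * c * f x) integrable_on {0..L}" by (intro integrable_continuous_interval continuous_intros f)
    have i3: "(\<lambda>x. c * c) integrable_on {0..L}" by (intro integrable_continuous_interval continuous_intros)
    have "integral {0..L} (\<lambda>x. (f x - c) * (f x - c)) = integral {0..L} (\<lambda>x. (f x * f x - 2 * c * f x) + c * c)"
      by (rule integral_cong) (simp add: algebra_simps power2_eq_square)
    also have "\<dots> = integral {0..L} (\<lambda>x. f x * f x - 2 * c * f x) + integral {0..L} (\<lambda>x. c * c)"
      by (rule integral_add) (use i1 i2 i3 in \<open>auto intro: integrable_diff\<close>)
    also have "integral {0..L} (\<lambda>x. f x * f x - 2 * c * f x) = integral {0..L} (\<lambda>x. f x * f x) - integral {0..L} (\<lambda>x. 2 * c * f x)"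
      by (rule integral_diff[OF i1 i2])
    finally show ?thesis using L by simp
  qed
  finally have "0 \<le> integral {0..L} (\<lambda>x. f x * f x) - 2 * c * integral {0..L} f + c * c * L" .
  then have "0 \<le> L * (integral {0..L} (\<lambda>x. f x * f x) - 2 * c * integral {0..L} f + c * c * L)"
    using L by simp
  moreover have "L * (integral {0..L} (\<lambda>x. f x * f x) - 2 * c * integral {0..L} f + c * c * L)
      = L * integral {0..L} (\<lambda>x. f x * f x) - (integral {0..L} f)^2"
    unfolding c_def using L by (simp add: field_simps power2_eq_square)
  ultimately show ?thesis by simp
qed

context kern begin

lemma H_nonneg:
  assumes "continuous_on {0..L} f" "\<And>y. y \<in> {0..L} \<Longrightarrow> f y \<ge> 0" "x \<ge> 0"
  shows "H L f x \<ge> 0"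
  unfolding H_def
  by (rule integral_nonneg[OF H_integrable[OF assms(1)]]) (use assms K_nonneg in auto)

lemma eigen_ge:
  assumes L: "L > 0" and eig: "eigen L e u"
  shows "integral {0..L} (H L (\<lambda>_. 1)) / L \<le> e"
proof (rule ccontr)
  assume "\<not> ?thesis"
  then have big: "integral {0..L} (H L (\<lambda>_. 1)) / L > e" by simp
  have e: "e > 0" using eigen_props(1)[OF L eig] .
  have uc: "continuous_on {0..L} u" and unn: "\<forall>x\<in>{0..L}. u x \<ge> 0"
    and eq: "\<forall>x\<in>{0..L}. e * u x = H L u x" using eig unfolding eigen_def by auto
  obtain c where c: "c > 0" "\<forall>x\<in>{0..L}. c * x \<le> u x" using eigen_props(2)[OF L eig] by blast
  obtain M where M: "M > 0" "\<forall>x y. 0 \<le> x \<longrightarrow> x \<le> L \<longrightarrow> 0 \<le> y \<longrightarrow> y \<le> L \<longrightarrow> K x y \<le> M * x * y"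
    using K_upper[of L] L by auto
  define p where "p n = (H L ^^ n) (\<lambda>_. 1)" for n
  have p_Suc: "p (Suc n) = H L (p n)" for n unfolding p_def by simp
  have p0: "p 0 = (\<lambda>_. 1)" unfolding p_def by simp
  have pc: "continuous_on {0..L} (p n)" for n
    by (induction n) (auto simp: p0 p_Suc intro: H_cont)
  have pnn: "\<forall>x\<in>{0..L}. p n x \<ge> 0" for n
  proof (induction n)
    case 0 then show ?case by (simp add: p0)
  next
    case (Suc n) then show ?case unfolding p_Suc by (auto intro!: H_nonneg pc)
  qed
  define a where "a n = integral {0..L} (p n)" for n
  have S: "integral {0..L} (\<lambda>x. p (k + j) x * p i x) = integral {0..L} (\<lambda>x. p j x * p (k + i) x)" for k i j
  proof (induction k arbitrary: i j)
    case 0 then show ?case by (simp add: mult.commute)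
  next
    case (Suc k)
    have "integral {0..L} (\<lambda>x. p (Suc k + j) x * p i x) = integral {0..L} (\<lambda>x. p (k + Suc j) x * p i x)" by simp
    also have "\<dots> = integral {0..L} (\<lambda>x. p (Suc j) x * p (k + i) x)" by (rule Suc)
    also have "\<dots> = integral {0..L} (\<lambda>x. p j x * p (Suc (k + i)) x)"
      unfolding p_Suc by (rule H_sym[OF pc pc])
    finally show ?case by simp
  qed
  have sq: "(a n)^2 \<le> L * a (2 * n)" for n
  proof -
    have "(a n)^2 \<le> L * integral {0..L} (\<lambda>x. p n x * p n x)" unfolding a_def by (rule CS_int[OF pc L])
    also have "integral {0..L} (\<lambda>x. p n x * p n x) = integral {0..L} (\<lambda>x. p (n + n) x * p 0 x)"
      using S[of n n 0] by simp
    also have "\<dots> = a (2 * n)" unfolding a_def p0 by (simp add: mult_2)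
    finally show ?thesis .
  qed
  define r where "r = a 1 / L"
  have r_gt: "r > e" unfolding r_def a_def using big by (simp add: p_Suc p0)
  have r0: "r > 0" using r_gt e by linarith
  have dbl: "a (2 ^ k) \<ge> L * r ^ (2 ^ k)" for k
  proof (induction k)
    case 0 then show ?case unfolding r_def using L by simp
  next
    case (Suc k)
    have nn: "0 \<le> L * r ^ (2 ^ k)" using L r0 by simp
    have "(L * r ^ (2 ^ k))^2 \<le> (a (2 ^ k))^2" using Suc nn by (intro power_mono) auto
    also have "\<dots> \<le> L * a (2 * 2 ^ k)" by (rule sq)
    finally have "(L * r ^ (2 ^ k))^2 \<le> L * a (2 ^ Suc k)" by simp
    moreover have "(L * r ^ (2 ^ k))^2 = L * (L * r ^ (2 ^ Suc k))"
      by (simp add: power2_eq_square power_mult_distrib power_add mult_2 mult_ac)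
    ultimately show ?case using L by (simp add: mult_le_cancel_left_pos)
  qed
  define J where "J = integral {0..L} (\<lambda>y. y * p 0 y)"
  have J: "J \<ge> 0" unfolding J_def by (rule integral_nonneg) (use p0 in \<open>auto intro!: integrable_continuous_interval continuous_intros\<close>)
  define A0 where "A0 = M * J / c"
  have A0: "A0 \<ge> 0" unfolding A0_def using M J c by simp
  have pup: "p (Suc n) x \<le> A0 * e ^ n * u x" if x: "x \<in> {0..L}" for n x
    using x
  proof (induction n arbitrary: x)
    case 0
    have "p 1 x \<le> M * x * J" unfolding J_def p_Suc[of 0] One_nat_def
      by (rule H_upper[OF M(2) pc]) (use 0 p0 in auto)
    also have "\<dots> = A0 * (c * x)" unfolding A0_def using c by simp
    also have "\<dots> \<le> A0 * u x" using c(2) 0 A0 by (intro mult_left_mono) auto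
    finally show ?case by simp
  next
    case (Suc n)
    have "p (Suc (Suc n)) x = H L (p (Suc n)) x" by (simp add: p_Suc)
    also have "\<dots> \<le> H L (\<lambda>y. A0 * e ^ n * u y) x"
      by (rule H_mono) (use Suc pc uc in \<open>auto intro!: continuous_intros\<close>)
    also have "\<dots> = A0 * e ^ n * H L u x" by (rule H_scale)
    also have "\<dots> = A0 * e ^ Suc n * u x" using eq Suc.prems by (simp add: mult_ac)
    finally show ?case .
  qed
  define A1 where "A1 = A0 * integral {0..L} u"
  have aup: "a (Suc n) \<le> A1 * e ^ n" for n
  proof -
    have "a (Suc n) \<le> integral {0..L} (\<lambda>x. A0 * e ^ n * u x)" unfolding a_def
      by (rule integral_le) (use pup pc uc in \<open>auto intro!: integrable_continuous_interval continuous_intros\<close>)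
    also have "\<dots> = A1 * e ^ n" unfolding A1_def by simp
    finally show ?thesis .
  qed
  define \<rho> where "\<rho> = r / e"
  have \<rho>: "\<rho> > 1" unfolding \<rho>_def using r_gt e by simp
  obtain k where k: "A1 / (L * e) < \<rho> ^ k" using real_arch_pow[OF \<rho>] by blast
  have "\<rho> ^ k \<le> \<rho> ^ (2 ^ k)" using \<rho> by (intro power_increasing) (auto intro: less_imp_le less_exp)
  moreover have "\<rho> ^ (2 ^ k) \<le> A1 / (L * e)"
  proof -
    obtain N where N: "2 ^ k = Suc N" by (metis not0_implies_Suc power_not_zero zero_neq_numeral)
    have "L * r ^ (Suc N) \<le> A1 * e ^ N" using dbl[of k] aup[of N] unfolding N by linarith
    moreover have "r ^ Suc N = \<rho> ^ Suc N * e ^ Suc N" unfolding \<rho>_def using e by (simp add: power_divide)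
    ultimately have "L * e * (\<rho> ^ Suc N * e ^ N) \<le> A1 * e ^ N" by (simp add: mult_ac)
    then have "L * e * \<rho> ^ Suc N \<le> A1" using e by (simp add: mult.assoc[symmetric])
    then show ?thesis unfolding N using L e by (simp add: field_simps)
  qed
  ultimately show False using k by linarith
qed

end


context kern begin

lemma big_R: assumes d: "\<delta> > 0" shows "\<exists>R>0. integral {-R..R} G > 1 - \<delta>"
proof -
  obtain B where B: "B > 0" "\<forall>a b. ball 0 B \<subseteq> cbox a b \<longrightarrow>
      norm (integral (cbox a b) (\<lambda>x. if x \<in> UNIV then G x else 0) - 1) < \<delta>"
    using int1 d unfolding has_integral_alt' by blast
  have "ball 0 B \<subseteq> cbox (-B) B" by (auto simp: dist_real_def)
  then have "norm (integral (cbox (-B) B) G - 1) < \<delta>" using B(2) by auto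
  then have "integral {-B..B} G > 1 - \<delta>" by (simp add: cbox_interval)
  then show ?thesis using B(1) by blast
qed

lemma H1_eq: "H L (\<lambda>_. 1) x = integral {0..L} (\<lambda>y. K x y)"
  unfolding H_def by simp

lemma low_limit:
  assumes e: "\<epsilon> > 0"
  shows "\<exists>N>0. \<forall>L\<ge>N. integral {0..L} (H L (\<lambda>_. 1)) / L \<ge> 1 - \<epsilon>"
proof -
  define \<delta> where "\<delta> = \<epsilon> / 4"
  have \<delta>: "\<delta> > 0" unfolding \<delta>_def using e by simp
  obtain R where R: "R > 0" "integral {-R..R} G > 1 - \<delta>" using big_R[OF \<delta>] by blast
  define N where "N = 2 * R + 4 * R / \<epsilon> + 1"
  have q4: "4 * R / \<epsilon> > 0" using R e by simp
  have N: "N > 0" unfolding N_def using R q4 by linarith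
  have "integral {0..L} (H L (\<lambda>_. 1)) / L \<ge> 1 - \<epsilon>" if L: "L \<ge> N" for L
  proof -
    have LR: "2 * R < L" using L q4 unfolding N_def by linarith
    have Lp: "L > 0" using LR R by simp
    have fc: "continuous_on {0..L} (H L (\<lambda>_. 1))" by (intro H_cont continuous_intros)
    have fnn: "H L (\<lambda>_. 1) x \<ge> 0" if "x \<in> {0..L}" for x using that by (intro H_nonneg) auto
    have mid: "H L (\<lambda>_. 1) x \<ge> 1 - 2 * \<delta>" if x: "x \<in> {R..L - R}" for x
    proof -
      have a1: "integral {-R..R} G \<le> integral {x - L..x} G"
        by (rule integral_subset_le) (use x G_integrable_ivl nonneg in auto)
      have a2: "integral {x..L + x} G \<le> integral {R..L + x} G"
        by (rule integral_subset_le) (use x G_integrable_ivl nonneg in auto)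
      have a3: "integral {-R..R} G + integral {R..L + x} G = integral {-R..L + x} G"
        by (rule Henstock_Kurzweil_Integration.integral_combine) (use x R G_integrable_ivl in auto)
      have a4: "integral {-R..L + x} G \<le> 1" by (rule G_int_le1)
      show ?thesis unfolding H1_eq Kint_eq using a1 a2 a3 a4 R(2) by linarith
    qed
    have sub: "{R..L - R} \<subseteq> {0..L}" using R(1) by auto
    have i1: "H L (\<lambda>_. 1) integrable_on {R..L - R}"
      by (rule integrable_continuous_interval) (rule continuous_on_subset[OF fc sub])
    have i2: "H L (\<lambda>_. 1) integrable_on {0..L}" by (rule integrable_continuous_interval[OF fc])
    have i3: "(\<lambda>_. 1 - 2 * \<delta>) integrable_on {R..L - R}"
      by (rule integrable_continuous_interval) (rule continuous_on_const)
    have "integral {R..L - R} (\<lambda>_. 1 - 2 * \<delta>) \<le> integral {R..L - R} (H L (\<lambda>_. 1))"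
      by (rule integral_le[OF i3 i1]) (rule mid)
    also have "\<dots> \<le> integral {0..L} (H L (\<lambda>_. 1))"
      by (rule integral_subset_le[OF sub i1 i2]) (use fnn in blast)
    finally have I: "(L - 2 * R) * (1 - 2 * \<delta>) \<le> integral {0..L} (H L (\<lambda>_. 1))" using LR by simp
    have "2 * R / L \<le> \<epsilon> / 2"
    proof -
      have "4 * R / \<epsilon> \<le> L" using L R e unfolding N_def by linarith
      then have "4 * R \<le> L * \<epsilon>" using e by (simp add: field_simps)
      then show ?thesis using Lp by (simp add: field_simps)
    qed
    moreover have "(L - 2 * R) * (1 - 2 * \<delta>) / L = 1 - 2 * \<delta> - 2 * R / L + 4 * \<delta> * R / L"
      using Lp by (simp add: field_simps)
    moreover have "4 * \<delta> * R / L \<ge> 0" using \<delta> R Lp by simp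
    ultimately have "(L - 2 * R) * (1 - 2 * \<delta>) / L \<ge> 1 - \<epsilon>" unfolding \<delta>_def by linarith
    moreover have "(L - 2 * R) * (1 - 2 * \<delta>) / L \<le> integral {0..L} (H L (\<lambda>_. 1)) / L"
      using I Lp by (simp add: divide_right_mono)
    ultimately show ?thesis by linarith
  qed
  then show ?thesis using N by blast
qed

lemma eps_char:
  assumes L: "L > 0"
  shows "(\<exists>!e. pos_eigenvalue G L e) \<and> (\<exists>w. eigen L (eps G L) w)"
proof -
  obtain e w where ew: "eigen L e w" using exists_eigen[OF L] by blast
  have pe: "pos_eigenvalue G L e" by (rule eigen_to_pos[OF L ew])
  have un: "e' = e" if pe': "pos_eigenvalue G L e'" for e'
  proof -
    obtain u where "eigen L e' u" using pos_eigen_imp[OF pe'] by blast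
    then show ?thesis using eigen_unique[OF L _ ew] by blast
  qed
  have ex1: "\<exists>!e. pos_eigenvalue G L e" by (rule ex1I[of _ e]) (rule pe, rule un)
  have th: "(THE e. pos_eigenvalue G L e) = e" by (rule the_equality) (rule pe, rule un)
  have "eps G L = e" unfolding eps_def using L th by simp
  then show ?thesis using ex1 ew by blast
qed

theorem main:
  "(\<forall>L>0. \<exists>!e. pos_eigenvalue G L e)
   \<and> strict_mono_on {0..} (eps G)
   \<and> ((eps G \<longlongrightarrow> 1) at_top)
   \<and> eps G 0 = 0"
proof (intro conjI allI impI)
  fix L :: real assume "L > 0" then show "\<exists>!e. pos_eigenvalue G L e" using eps_char by blast
next
  show e0: "eps G 0 = 0" unfolding eps_def by simp
  show "strict_mono_on {0..} (eps G)"
  proof (rule strict_mono_onI)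
    fix r s :: real assume rs: "r \<in> {0..}" "s \<in> {0..}" "r < s"
    have s: "s > 0" using rs by auto
    obtain v where v: "eigen s (eps G s) v" using eps_char[OF s] by blast
    show "eps G r < eps G s"
    proof (cases "r = 0")
      case True then show ?thesis using e0 eigen_props(1)[OF s v] by simp
    next
      case False
      then have r: "r > 0" using rs by auto
      obtain u where u: "eigen r (eps G r) u" using eps_char[OF r] by blast
      show ?thesis by (rule eigen_mono[OF r rs(3) u v])
    qed
  qed
next
  show "(eps G \<longlongrightarrow> 1) at_top"
    unfolding tendsto_iff
  proof (intro allI impI)
    fix \<epsilon> :: real assume e: "\<epsilon> > 0"
    obtain N where N: "N > 0" "\<forall>L\<ge>N. integral {0..L} (H L (\<lambda>_. 1)) / L \<ge> 1 - \<epsilon> / 2"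
      using low_limit[of "\<epsilon> / 2"] e by auto
    show "\<forall>\<^sub>F L in at_top. dist (eps G L) 1 < \<epsilon>"
    proof (rule eventually_at_top_linorderI[of N])
      fix L assume L: "N \<le> L"
      have Lp: "L > 0" using L N by simp
      obtain w where w: "eigen L (eps G L) w" using eps_char[OF Lp] by blast
      have "eps G L \<le> 1" by (rule eigen_le1[OF Lp w])
      moreover have "eps G L \<ge> 1 - \<epsilon> / 2" using eigen_ge[OF Lp w] N(2) L by fastforce
      ultimately show "dist (eps G L) 1 < \<epsilon>" using e by (simp add: dist_real_def abs_if)
    qed
  qed
qed

end



theorem proposition4p12:
  fixes G g :: "real \<Rightarrow> real"
  assumes G_nonneg: "\<forall>x. G x \<ge> 0"
    and G_supp: "closure {x. G x \<noteq> 0} = UNIV"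
    and G_W11: "integrable lborel G" "integrable lborel (deriv G)"
    and G_Linf: "bounded (range G)"
    and G_C2: "\<forall>x. G differentiable (at x)" "\<forall>x. (deriv G) differentiable (at x)"
      "continuous_on UNIV (deriv (deriv G))"
    and G_radial: "\<forall>x. G x = g \<bar>x\<bar>"
    and g_decr: "\<forall>r>0. (g has_real_derivative deriv g r) (at r) \<and> deriv g r < 0"
    and g2_0: "deriv (deriv G) 0 < 0"
    and g_lim: "(g \<longlongrightarrow> 0) at_top"
    and G_mass: "(LINT x|lborel. G x) = 1"
  shows "(\<forall>L>0. \<exists>!e. pos_eigenvalue G L e)
         \<and> strict_mono_on {0..} (eps G)
         \<and> ((eps G \<longlongrightarrow> 1) at_top)
         \<and> eps G 0 = 0"
proof -
  have d1: "\<And>x. (G has_real_derivative deriv G x) (at x)"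
    using G_C2(1) DERIV_deriv_iff_real_differentiable by blast
  have d2: "\<And>x. (deriv G has_real_derivative deriv (deriv G) x) (at x)"
    using G_C2(2) DERIV_deriv_iff_real_differentiable by blast
  have even: "\<And>x. G (-x) = G x" using G_radial by simp
  have neg: "deriv G x < 0" if x: "x > 0" for x
  proof -
    have dg1: "(g has_real_derivative deriv g x) (at x)" and dg: "deriv g x < 0" using g_decr x by auto
    from dg1 have "(G has_real_derivative deriv g x) (at x)"
    proof (rule has_field_derivative_transform_within_open[where S="{0<..}"])
      show "open {0::real<..}" by simp
      show "x \<in> {0<..}" using x by simp
      fix y :: real assume "y \<in> {0<..}" then show "g y = G y" using G_radial by simp
    qed
    then have "deriv G x = deriv g x" using DERIV_unique[OF d1] by blast
    then show ?thesis using dg by simp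
  qed
  have int1: "(G has_integral 1) UNIV"
    using has_integral_integral_lborel[OF G_W11(1)] G_mass by simp
  interpret k: kern G "deriv G" "deriv (deriv G)"
    by (unfold_locales) (use even d1 d2 G_C2(3) g2_0 neg G_nonneg int1 in auto)
  show ?thesis by (rule k.main)
qed



end
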